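(* Consider the two-tubes TFE equations (defined in the context). (A) For every $v<0$ there exist exactly two (up to translation) traveling wave solutions $(c_1,c_2)(y-vt)$ with speed $v$ satisfying $(c_1,c_2)(-\infty)=(-1,-1)$; they connect $(-1,-1)$ to $(-2v-1,-6v-1)$ and $(-1,-1)$ to $(-6v-1,-2v-1)$, respectively. For $v=0$ the only stationary solution $(c_1,c_2)(y)$ satisfying $(c_1,c_2)(-\infty)=(-1,-1)$ is the constant $(c_1,c_2)\equiv(-1,-1)$. For $v>0$ there are no non-constant traveling waves with speed $v$ satisfying $(c_1,c_2)(-\infty)=(-1,-1)$. (B) For every $v>0$ there exist exactly two (up to translation) traveling wave solutions $(c_1,c_2)(y-vt)$ with speed $v$ satisfying $(c_1,c_2)(+\infty)=(1,1)$; they connect $(-2v+1,-6v+1)$ to $(1,1)$ and $(-6v+1,-2v+1)$ to $(1,1)$, respectively. For $v=0$ the only stationary solution $(c_1,c_2)(y)$ satisfying $(c_1,c_2)(+\infty)=(1,1)$ is the constant $(c_1,c_2)\equiv(1,1)$. For $v<0$ there are no non-constant traveling waves with speed $v$ satisfying $(c_1,c_2)(+\infty)=(1,1)$.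
   Context: Two-tubes TFE equations: unknowns $c_1,c_2$, real functions of $(t,y)\in[0,\infty)\times\mathbb{R}$, satisfying $$\partial_t c_1+\partial_y(u_1c_1)-\partial_{yy}c_1=-f,\qquad \partial_t c_2+\partial_y(u_2c_2)-\partial_{yy}c_2=f,$$ with $u_1=(c_2-c_1)/2$, $u_2=-u_1$, and $f=-(\partial_y u_1)\,c_1$ if $\partial_y u_1\le 0$, $f=-(\partial_y u_1)\,c_2$ if $\partial_y u_1\ge0$. A traveling wave with speed $v$ is a solution of the form $(c_1,c_2)(t,y)=\tilde g(y-vt)$ with $\tilde g:\mathbb{R}\to\mathbb{R}^2$ continuous (and smooth enough to solve the equations classically) having limits $\tilde g(\pm\infty)$; it connects $\tilde g(-\infty)$ to $\tilde g(+\infty)$. *)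

theory Defs
  imports "HOL-Analysis.Analysis"
begin

definition pdy :: "(real \<Rightarrow> real \<Rightarrow> real) \<Rightarrow> real \<Rightarrow> real \<Rightarrow> real" where
  "pdy c t y = deriv (\<lambda>z. c t z) y"

definition tfe_u1 :: "(real \<Rightarrow> real \<Rightarrow> real) \<Rightarrow> (real \<Rightarrow> real \<Rightarrow> real) \<Rightarrow> real \<Rightarrow> real \<Rightarrow> real" where
  "tfe_u1 c1 c2 t y = (c2 t y - c1 t y) / 2"

text \<open>Exchange term f: f = -(d_y u1) c1 if d_y u1 <= 0, f = -(d_y u1) c2 if d_y u1 >= 0
  (both branches agree when d_y u1 = 0).\<close>
definition tfe_f :: "(real \<Rightarrow> real \<Rightarrow> real) \<Rightarrow> (real \<Rightarrow> real \<Rightarrow> real) \<Rightarrow> real \<Rightarrow> real \<Rightarrow> real" where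
  "tfe_f c1 c2 t y =
     (let uy = pdy (tfe_u1 c1 c2) t y in
      if uy \<le> 0 then - uy * c1 t y else - uy * c2 t y)"

definition tfe_solution :: "(real \<Rightarrow> real \<Rightarrow> real) \<Rightarrow> (real \<Rightarrow> real \<Rightarrow> real) \<Rightarrow> bool" where
  "tfe_solution c1 c2 \<longleftrightarrow>
     (\<forall>t\<ge>0. \<forall>y.
        (\<lambda>z. c1 t z) differentiable (at y) \<and>
        (\<lambda>z. c2 t z) differentiable (at y) \<and>
        (\<lambda>z. pdy c1 t z) differentiable (at y) \<and>
        (\<lambda>z. pdy c2 t z) differentiable (at y) \<and>
        (\<exists>D1 D2.
           ((\<lambda>s. c1 s y) has_real_derivative D1) (at t within {0..}) \<and>
           ((\<lambda>s. c2 s y) has_real_derivative D2) (at t within {0..}) \<and>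
           D1 + pdy (\<lambda>s z. tfe_u1 c1 c2 s z * c1 s z) t y - pdy (pdy c1) t y
              = - tfe_f c1 c2 t y \<and>
           D2 + pdy (\<lambda>s z. - tfe_u1 c1 c2 s z * c2 s z) t y - pdy (pdy c2) t y
              = tfe_f c1 c2 t y))"

definition traveling_wave :: "real \<Rightarrow> (real \<Rightarrow> real \<times> real) \<Rightarrow> bool" where
  "traveling_wave v g \<longleftrightarrow>
     continuous_on UNIV g \<and>
     (\<exists>L. (g \<longlongrightarrow> L) at_bot) \<and> (\<exists>R. (g \<longlongrightarrow> R) at_top) \<and>
     tfe_solution (\<lambda>t y. fst (g (y - v * t))) (\<lambda>t y. snd (g (y - v * t)))"

definition nonconstant :: "(real \<Rightarrow> real \<times> real) \<Rightarrow> bool" where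
  "nonconstant g \<longleftrightarrow> (\<exists>x y. g x \<noteq> g y)"

end

theory Submission
  imports Defs "HOL-Real_Asymp.Real_Asymp"
begin

lemma gronwall_zero:
  fixes f f' :: "real \<Rightarrow> real"
  assumes der: "\<And>x. c < x \<Longrightarrow> x < d \<Longrightarrow> (f has_real_derivative f' x) (at x)"
    and bnd: "\<And>x. c < x \<Longrightarrow> x < d \<Longrightarrow> \<bar>f' x\<bar> \<le> K * f x"
    and nonneg: "\<And>x. c < x \<Longrightarrow> x < d \<Longrightarrow> 0 \<le> f x"
    and x0: "c < x0" "x0 < d" "f x0 = 0" and x: "c < x" "x < d"
  shows "f x = 0"
proof (cases "x0 < x")
  case True
  define h where "h y = f y * exp (- K * y)" for y
  have "\<And>y. x0 \<le> y \<Longrightarrow> y \<le> x \<Longrightarrow> (h has_real_derivative (f' y * exp (- K * y) + f y * (- K * exp (- K * y)))) (at y)"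
  proof -
    fix y assume y: "x0 \<le> y" "y \<le> x"
    have "(f has_real_derivative f' y) (at y)" using der y x0 x by auto
    thus "(h has_real_derivative (f' y * exp (- K * y) + f y * (- K * exp (- K * y)))) (at y)"
      unfolding h_def by (auto intro!: derivative_eq_intros)
  qed
  from MVT2[OF True this] obtain z where z: "x0 < z" "z < x"
    "h x - h x0 = (x - x0) * (f' z * exp (- K * z) + f z * (- K * exp (- K * z)))" by blast
  have "f' z \<le> K * f z" using bnd[of z] z x0 x by auto
  hence "f' z * exp (- K * z) + f z * (- K * exp (- K * z)) = (f' z - K * f z) * exp (- K * z)"
    by (simp add: algebra_simps)
  also have "\<dots> \<le> 0" using \<open>f' z \<le> K * f z\<close> by (simp add: mult_nonpos_nonneg)
  finally have neg: "f' z * exp (- K * z) + f z * (- K * exp (- K * z)) \<le> 0" .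
  have "h x - h x0 \<le> 0" unfolding z(3) using True neg by (intro mult_nonneg_nonpos) auto
  hence "h x \<le> h x0" by simp
  hence "f x * exp (- K * x) \<le> 0" using x0 by (simp add: h_def)
  hence "f x \<le> 0" by (simp add: mult_le_0_iff)
  thus ?thesis using nonneg[OF x] by linarith
next
  case False
  show ?thesis
  proof (cases "x = x0")
    case True thus ?thesis using x0 by simp
  next
    case False2: False
    hence lt: "x < x0" using False by simp
    define h where "h y = f y * exp (K * y)" for y
    have "\<And>y. x \<le> y \<Longrightarrow> y \<le> x0 \<Longrightarrow> (h has_real_derivative (f' y * exp (K * y) + f y * (K * exp (K * y)))) (at y)"
    proof -
      fix y assume y: "x \<le> y" "y \<le> x0"
      have "(f has_real_derivative f' y) (at y)" using der y x0 x by auto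
      thus "(h has_real_derivative (f' y * exp (K * y) + f y * (K * exp (K * y)))) (at y)"
        unfolding h_def by (auto intro!: derivative_eq_intros)
    qed
    from MVT2[OF lt this] obtain z where z: "x < z" "z < x0"
      "h x0 - h x = (x0 - x) * (f' z * exp (K * z) + f z * (K * exp (K * z)))" by blast
    have "- f' z \<le> K * f z" using bnd[of z] z x0 x by auto
    hence "f' z * exp (K * z) + f z * (K * exp (K * z)) = (f' z + K * f z) * exp (K * z)"
      by (simp add: algebra_simps)
    also have "\<dots> \<ge> 0" using \<open>- f' z \<le> K * f z\<close> by simp
    finally have pos: "f' z * exp (K * z) + f z * (K * exp (K * z)) \<ge> 0" .
    have "h x0 - h x \<ge> 0" unfolding z(3) using lt pos by (intro mult_nonneg_nonneg) auto
    hence "h x \<le> h x0" by simp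
    hence "f x * exp (K * x) \<le> 0" using x0 by (simp add: h_def)
    hence "f x \<le> 0" by (simp add: mult_le_0_iff)
    thus ?thesis using nonneg[OF x] by linarith
  qed
qed

lemma gronwall_zero_UNIV:
  fixes f f' :: "real \<Rightarrow> real"
  assumes der: "\<And>x. (f has_real_derivative f' x) (at x)"
    and bnd: "\<And>x. \<bar>f' x\<bar> \<le> K * f x"
    and nonneg: "\<And>x. 0 \<le> f x"
    and x0: "f x0 = 0"
  shows "f x = 0"
  by (rule gronwall_zero[of "min x x0 - 1" "max x x0 + 1" f f' K x0]) (use assms in auto)

lemma first_exit:
  fixes g :: "real \<Rightarrow> real"
  assumes cont: "continuous_on {a..b} g" and ga: "g a > 0" and gb: "g b \<le> 0" and ab: "a \<le> b"
  shows "\<exists>t. a < t \<and> t \<le> b \<and> g t = 0 \<and> (\<forall>s. a \<le> s \<and> s < t \<longrightarrow> g s > 0)"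
proof -
  define S where "S = {a..b} \<inter> g -` {..0}"
  have "closed S" unfolding S_def
    by (rule continuous_closed_preimage[OF cont]) auto
  hence "compact S" unfolding S_def
    by (meson bounded_closed_interval bounded_subset compact_eq_bounded_closed inf_le1)
  moreover have "b \<in> S" using gb ab by (auto simp: S_def)
  ultimately obtain t where t: "t \<in> S" "\<And>y. y \<in> S \<Longrightarrow> t \<le> y"
    using compact_attains_inf[of S] by blast
  have ta: "a \<le> t" "t \<le> b" "g t \<le> 0" using t(1) by (auto simp: S_def)
  have "a \<noteq> t" using ga ta by auto
  hence at: "a < t" using ta by simp
  have pos: "\<forall>s. a \<le> s \<and> s < t \<longrightarrow> g s > 0"
  proof (intro allI impI)
    fix s assume s: "a \<le> s \<and> s < t"
    show "g s > 0"
    proof (rule ccontr)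
      assume "\<not> g s > 0"
      hence "s \<in> S" using s ta by (auto simp: S_def)
      thus False using t(2) s by force
    qed
  qed
  have "continuous_on {a..t} g" using cont ta by (auto intro: continuous_on_subset)
  then obtain x where x: "a \<le> x" "x \<le> t" "g x = 0"
    using IVT2'[of g t 0 a] ta ga at by auto
  have "x \<in> S" using x ta by (auto simp: S_def)
  hence "x = t" using t(2) x by force
  thus ?thesis using x at ta pos by auto
qed

lemma last_below:
  fixes g :: "real \<Rightarrow> real"
  assumes cont: "continuous_on {a..b} g" and ga: "g a \<le> c" and gb: "g b > c" and ab: "a \<le> b"
  shows "\<exists>m. a \<le> m \<and> m < b \<and> g m \<le> c \<and> (\<forall>s. m < s \<and> s \<le> b \<longrightarrow> g s > c)"
proof -
  define S where "S = {a..b} \<inter> g -` {..c}"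
  have "closed S" unfolding S_def
    by (rule continuous_closed_preimage[OF cont]) auto
  hence "compact S" unfolding S_def
    by (meson bounded_closed_interval bounded_subset compact_eq_bounded_closed inf_le1)
  moreover have "a \<in> S" using ga ab by (auto simp: S_def)
  ultimately obtain m where m: "m \<in> S" "\<And>y. y \<in> S \<Longrightarrow> y \<le> m"
    using compact_attains_sup[of S] by blast
  have ma: "a \<le> m" "m \<le> b" "g m \<le> c" using m(1) by (auto simp: S_def)
  have "m \<noteq> b" using gb ma by auto
  hence mb: "m < b" using ma by simp
  have "\<forall>s. m < s \<and> s \<le> b \<longrightarrow> g s > c"
  proof (intro allI impI)
    fix s assume s: "m < s \<and> s \<le> b"
    show "g s > c"
    proof (rule ccontr)
      assume "\<not> g s > c"
      hence "s \<in> S" using s ma by (auto simp: S_def)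
      thus False using m(2) s by force
    qed
  qed
  thus ?thesis using ma mb by auto
qed

lemma bounded_lim2:
  fixes f :: "real \<Rightarrow> real"
  assumes cont: "continuous_on UNIV f" and l1: "(f \<longlongrightarrow> L1) at_bot" and l2: "(f \<longlongrightarrow> L2) at_top"
  shows "\<exists>M. \<forall>x. \<bar>f x\<bar> \<le> M"
proof -
  have "eventually (\<lambda>x. dist (f x) L1 < 1) at_bot" using l1 by (rule tendstoD) simp
  then obtain X1 where X1: "\<And>x. x \<le> X1 \<Longrightarrow> dist (f x) L1 < 1" by (auto simp: eventually_at_bot_linorder)
  have "eventually (\<lambda>x. dist (f x) L2 < 1) at_top" using l2 by (rule tendstoD) simp
  then obtain X2 where X2: "\<And>x. x \<ge> X2 \<Longrightarrow> dist (f x) L2 < 1" by (auto simp: eventually_at_top_linorder)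
  have "compact (f ` {X1..X2})"
    by (rule compact_continuous_image) (auto intro: continuous_on_subset[OF cont])
  then obtain M0 where M0: "\<And>y. y \<in> f ` {X1..X2} \<Longrightarrow> norm y \<le> M0"
    using compact_imp_bounded bounded_iff by metis
  show ?thesis
  proof (intro exI allI)
    fix x
    show "\<bar>f x\<bar> \<le> max M0 (max (\<bar>L1\<bar> + 1) (\<bar>L2\<bar> + 1))"
    proof (cases "x \<le> X1")
      case True thus ?thesis using X1[OF True] by (auto simp: dist_real_def)
    next
      case False
      show ?thesis
      proof (cases "x \<ge> X2")
        case True thus ?thesis using X2[OF True] by (auto simp: dist_real_def)
      next
        case False2: False
        hence "f x \<in> f ` {X1..X2}" using False by auto
        thus ?thesis using M0 by fastforce
      qed
    qed
  qed
qed

lemma deriv_lim_top: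
  fixes f f' :: "real \<Rightarrow> real"
  assumes der: "\<And>x. (f has_real_derivative f' x) (at x)"
    and lf: "(f \<longlongrightarrow> L) at_top" and lf': "(f' \<longlongrightarrow> k) at_top"
  shows "k = 0"
proof (rule ccontr)
  assume k: "k \<noteq> 0"
  have "eventually (\<lambda>x. dist (f' x) k < \<bar>k\<bar>/2) at_top" using lf' k by (intro tendstoD) auto
  then obtain X1 where X1: "\<And>x. x \<ge> X1 \<Longrightarrow> \<bar>f' x - k\<bar> < \<bar>k\<bar>/2" by (auto simp: eventually_at_top_linorder dist_real_def)
  have "eventually (\<lambda>x. dist (f x) L < \<bar>k\<bar>/4) at_top" using lf k by (intro tendstoD) auto
  then obtain X2 where X2: "\<And>x. x \<ge> X2 \<Longrightarrow> \<bar>f x - L\<bar> < \<bar>k\<bar>/4" by (auto simp: eventually_at_top_linorder dist_real_def)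
  define x where "x = max X1 X2"
  obtain z where z: "x < z" "z < x + 1" "f (x + 1) - f x = (x + 1 - x) * f' z"
    using MVT2[of x "x+1" f f'] der by auto
  have "\<bar>f' z - k\<bar> < \<bar>k\<bar>/2" using X1[of z] z by (simp add: x_def)
  moreover have "\<bar>f (x+1) - L\<bar> < \<bar>k\<bar>/4" "\<bar>f x - L\<bar> < \<bar>k\<bar>/4" using X2[of x] X2[of "x+1"] by (auto simp: x_def)
  ultimately show False using z(3) by (auto simp: abs_if split: if_splits)
qed

lemma deriv_lim_bot:
  fixes f f' :: "real \<Rightarrow> real"
  assumes der: "\<And>x. (f has_real_derivative f' x) (at x)"
    and lf: "(f \<longlongrightarrow> L) at_bot" and lf': "(f' \<longlongrightarrow> k) at_bot"
  shows "k = 0"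
proof (rule ccontr)
  assume k: "k \<noteq> 0"
  have "eventually (\<lambda>x. dist (f' x) k < \<bar>k\<bar>/2) at_bot" using lf' k by (intro tendstoD) auto
  then obtain X1 where X1: "\<And>x. x \<le> X1 \<Longrightarrow> \<bar>f' x - k\<bar> < \<bar>k\<bar>/2" by (auto simp: eventually_at_bot_linorder dist_real_def)
  have "eventually (\<lambda>x. dist (f x) L < \<bar>k\<bar>/4) at_bot" using lf k by (intro tendstoD) auto
  then obtain X2 where X2: "\<And>x. x \<le> X2 \<Longrightarrow> \<bar>f x - L\<bar> < \<bar>k\<bar>/4" by (auto simp: eventually_at_bot_linorder dist_real_def)
  define x where "x = min X1 X2 - 1"
  obtain z where z: "x < z" "z < x + 1" "f (x + 1) - f x = (x + 1 - x) * f' z"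
    using MVT2[of x "x+1" f f'] der by auto
  have "\<bar>f' z - k\<bar> < \<bar>k\<bar>/2" using X1[of z] z by (simp add: x_def)
  moreover have "\<bar>f (x+1) - L\<bar> < \<bar>k\<bar>/4" "\<bar>f x - L\<bar> < \<bar>k\<bar>/4" using X2[of x] X2[of "x+1"] by (auto simp: x_def)
  ultimately show False using z(3) by (auto simp: abs_if split: if_splits)
qed

definition ode2 :: "real \<Rightarrow> (real\<Rightarrow>real) \<Rightarrow> (real\<Rightarrow>real) \<Rightarrow> (real\<Rightarrow>real) \<Rightarrow> (real\<Rightarrow>real) \<Rightarrow> (real\<Rightarrow>real) \<Rightarrow> (real\<Rightarrow>real) \<Rightarrow> bool" where
"ode2 v a a1 a2 b b1 b2 \<longleftrightarrow> (\<forall>x. (a has_real_derivative a1 x) (at x) \<and> (a1 has_real_derivative a2 x) (at x) \<and>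
   (b has_real_derivative b1 x) (at x) \<and> (b1 has_real_derivative b2 x) (at x) \<and>
   a2 x = ((b x - a x)/2 - v) * a1 x - (if b1 x - a1 x \<le> 0 then 0 else (b x - a x) * (b1 x - a1 x) / 2) \<and>
   b2 x = - ((b x - a x)/2 + v) * b1 x - (if b1 x - a1 x \<le> 0 then (b x - a x) * (b1 x - a1 x) / 2 else 0))"

lemma shift_der:
  assumes "\<And>x. (f has_real_derivative f1 x) (at x)"
  shows "((\<lambda>z. f (z - c)) has_real_derivative f1 (y - c)) (at y)"
proof -
  have "((\<lambda>z. z - c) has_real_derivative 1) (at y)" by (auto intro!: derivative_eq_intros)
  from DERIV_chain2[where g="\<lambda>z. z - c" and x=y, OF assms this] show ?thesis by simp
qed

lemma tw_to_ode:
  assumes tw: "traveling_wave v g"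
  defines "a \<equiv> (\<lambda>x. fst (g x))" and "b \<equiv> (\<lambda>x. snd (g x))"
  shows "ode2 v a (deriv a) (deriv (deriv a)) b (deriv b) (deriv (deriv b))"
proof -
  define c1 where "c1 = (\<lambda>t y. fst (g (y - v * t)))"
  define c2 where "c2 = (\<lambda>t y. snd (g (y - v * t)))"
  have sol: "tfe_solution c1 c2" using tw by (simp add: traveling_wave_def c1_def c2_def)
  have c10: "(\<lambda>z. c1 0 z) = a" "(\<lambda>z. c2 0 z) = b" by (auto simp: c1_def c2_def a_def b_def)
  have p10: "(\<lambda>z. pdy c1 0 z) = deriv a" "(\<lambda>z. pdy c2 0 z) = deriv b"
    by (auto simp: pdy_def c10[unfolded fun_eq_iff] c1_def c2_def a_def b_def)
  show ?thesis unfolding ode2_def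
  proof (intro allI)
    fix y
    from sol[unfolded tfe_solution_def, rule_format, of 0 y]
    obtain D1 D2 where
      da: "(\<lambda>z. c1 0 z) differentiable (at y)" and db: "(\<lambda>z. c2 0 z) differentiable (at y)" and
      da1: "(\<lambda>z. pdy c1 0 z) differentiable (at y)" and db1: "(\<lambda>z. pdy c2 0 z) differentiable (at y)" and
      D1: "((\<lambda>s. c1 s y) has_real_derivative D1) (at 0 within {0..})" and
      D2: "((\<lambda>s. c2 s y) has_real_derivative D2) (at 0 within {0..})" and
      e1: "D1 + pdy (\<lambda>s z. tfe_u1 c1 c2 s z * c1 s z) 0 y - pdy (pdy c1) 0 y = - tfe_f c1 c2 0 y" and
      e2: "D2 + pdy (\<lambda>s z. - tfe_u1 c1 c2 s z * c2 s z) 0 y - pdy (pdy c2) 0 y = tfe_f c1 c2 0 y"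
      by auto
    have dall: "\<And>x. (a has_real_derivative deriv a x) (at x)" "\<And>x. (b has_real_derivative deriv b x) (at x)"
      using sol[unfolded tfe_solution_def, rule_format, of 0] c10
      by (auto simp: DERIV_deriv_iff_real_differentiable)
    have ha: "(a has_real_derivative deriv a y) (at y)" "(b has_real_derivative deriv b y) (at y)"
      using dall by auto
    have ha1: "(deriv a has_real_derivative deriv (deriv a) y) (at y)" "(deriv b has_real_derivative deriv (deriv b) y) (at y)"
      using da1 db1 p10 by (auto simp: DERIV_deriv_iff_real_differentiable)
    have "((\<lambda>s. c1 s y) has_real_derivative deriv a y * (- v)) (at 0)"
    proof -
      have "((\<lambda>s. y - v * s) has_real_derivative - v) (at 0)" by (auto intro!: derivative_eq_intros)
      from DERIV_chain2[where g="\<lambda>s. y - v * s" and x=0, OF dall(1) this] show ?thesis by (simp add: c1_def a_def)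
    qed
    hence "D1 = deriv a y * (- v)"
      using D1 by (intro has_field_derivative_unique[of "\<lambda>s. c1 s y" _ 0 "{0..}"])
         (auto simp: at_within_Ici_at_right intro: has_field_derivative_at_within)
    have "((\<lambda>s. c2 s y) has_real_derivative deriv b y * (- v)) (at 0)"
    proof -
      have "((\<lambda>s. y - v * s) has_real_derivative - v) (at 0)" by (auto intro!: derivative_eq_intros)
      from DERIV_chain2[where g="\<lambda>s. y - v * s" and x=0, OF dall(2) this] show ?thesis by (simp add: c2_def b_def)
    qed
    hence "D2 = deriv b y * (- v)"
      using D2 by (intro has_field_derivative_unique[of "\<lambda>s. c2 s y" _ 0 "{0..}"])
         (auto simp: at_within_Ici_at_right intro: has_field_derivative_at_within)
    have u10: "(\<lambda>z. tfe_u1 c1 c2 0 z) = (\<lambda>z. (b z - a z) / 2)" by (auto simp: tfe_u1_def c10[unfolded fun_eq_iff])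
    have "pdy (\<lambda>s z. tfe_u1 c1 c2 s z * c1 s z) 0 y = deriv (\<lambda>z. (b z - a z) / 2 * a z) y"
      by (simp add: pdy_def u10[unfolded fun_eq_iff] c10[unfolded fun_eq_iff])
    also have "\<dots> = (deriv b y - deriv a y) / 2 * a y + (b y - a y) / 2 * deriv a y"
      by (rule DERIV_imp_deriv) (auto intro!: derivative_eq_intros ha)
    finally have p1: "pdy (\<lambda>s z. tfe_u1 c1 c2 s z * c1 s z) 0 y = (deriv b y - deriv a y) / 2 * a y + (b y - a y) / 2 * deriv a y" .
    have "pdy (\<lambda>s z. - tfe_u1 c1 c2 s z * c2 s z) 0 y = deriv (\<lambda>z. - ((b z - a z) / 2) * b z) y"
      by (simp add: pdy_def u10[unfolded fun_eq_iff] c10[unfolded fun_eq_iff])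
    also have "\<dots> = - ((deriv b y - deriv a y) / 2) * b y + - ((b y - a y) / 2) * deriv b y"
      by (rule DERIV_imp_deriv) (auto intro!: derivative_eq_intros ha simp: field_simps)
    finally have p2: "pdy (\<lambda>s z. - tfe_u1 c1 c2 s z * c2 s z) 0 y = - ((deriv b y - deriv a y) / 2) * b y + - ((b y - a y) / 2) * deriv b y" .
    have pp: "pdy (pdy c1) 0 y = deriv (deriv a) y" "pdy (pdy c2) 0 y = deriv (deriv b) y"
      using p10 by (auto simp: pdy_def[of "pdy _"])
    have "pdy (tfe_u1 c1 c2) 0 y = deriv (\<lambda>z. (b z - a z) / 2) y"
      by (simp add: pdy_def u10[unfolded fun_eq_iff])
    also have "\<dots> = (deriv b y - deriv a y) / 2"
      by (rule DERIV_imp_deriv) (auto intro!: derivative_eq_intros ha)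
    finally have pu: "pdy (tfe_u1 c1 c2) 0 y = (deriv b y - deriv a y) / 2" .
    have f: "tfe_f c1 c2 0 y = (if (deriv b y - deriv a y) / 2 \<le> 0 then - ((deriv b y - deriv a y) / 2) * a y else - ((deriv b y - deriv a y) / 2) * b y)"
      by (simp add: tfe_f_def pu Let_def c10[unfolded fun_eq_iff])
    have ca: "c1 0 y = a y" "c2 0 y = b y" using c10 by (auto simp: fun_eq_iff)
    have "deriv (deriv a) y = ((b y - a y)/2 - v) * deriv a y - (if deriv b y - deriv a y \<le> 0 then 0 else (b y - a y) * (deriv b y - deriv a y) / 2)"
      using e1 unfolding p1 pp f \<open>D1 = _\<close>
      by (auto split: if_splits simp: field_simps)
    moreover have "deriv (deriv b) y = - ((b y - a y)/2 + v) * deriv b y - (if deriv b y - deriv a y \<le> 0 then (b y - a y) * (deriv b y - deriv a y) / 2 else 0)"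
      using e2 unfolding p2 pp f \<open>D2 = _\<close>
      by (auto split: if_splits simp: field_simps)
    ultimately show "(a has_real_derivative deriv a y) (at y) \<and> (deriv a has_real_derivative deriv (deriv a) y) (at y) \<and>
     (b has_real_derivative deriv b y) (at y) \<and> (deriv b has_real_derivative deriv (deriv b) y) (at y) \<and>
     deriv (deriv a) y = ((b y - a y)/2 - v) * deriv a y - (if deriv b y - deriv a y \<le> 0 then 0 else (b y - a y) * (deriv b y - deriv a y) / 2) \<and>
     deriv (deriv b) y = - ((b y - a y)/2 + v) * deriv b y - (if deriv b y - deriv a y \<le> 0 then (b y - a y) * (deriv b y - deriv a y) / 2 else 0)"
      using ha ha1 by auto
  qed
qed

lemma ode_to_tfe:
  assumes ode: "ode2 v a a1 a2 b b1 b2"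
  shows "tfe_solution (\<lambda>t y. a (y - v * t)) (\<lambda>t y. b (y - v * t))"
proof -
  define c1 where "c1 = (\<lambda>t y. a (y - v * t))"
  define c2 where "c2 = (\<lambda>t y. b (y - v * t))"
  have da: "\<And>x. (a has_real_derivative a1 x) (at x)" and da1: "\<And>x. (a1 has_real_derivative a2 x) (at x)"
    and db: "\<And>x. (b has_real_derivative b1 x) (at x)" and db1: "\<And>x. (b1 has_real_derivative b2 x) (at x)"
    using ode unfolding ode2_def by blast+
  have ea: "\<And>x. a2 x = ((b x - a x)/2 - v) * a1 x - (if b1 x - a1 x \<le> 0 then 0 else (b x - a x) * (b1 x - a1 x) / 2)"
   and eb: "\<And>x. b2 x = - ((b x - a x)/2 + v) * b1 x - (if b1 x - a1 x \<le> 0 then (b x - a x) * (b1 x - a1 x) / 2 else 0)"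
    using ode unfolding ode2_def by blast+
  have sol: "tfe_solution c1 c2" unfolding tfe_solution_def
  proof (intro allI impI conjI)
    fix t y :: real
    assume "t \<ge> 0"
    have sa: "\<And>z. ((\<lambda>z. c1 t z) has_real_derivative a1 (z - v * t)) (at z)"
      unfolding c1_def by (rule shift_der[OF da])
    have sb: "\<And>z. ((\<lambda>z. c2 t z) has_real_derivative b1 (z - v * t)) (at z)"
      unfolding c2_def by (rule shift_der[OF db])
    have pa: "(\<lambda>z. pdy c1 t z) = (\<lambda>z. a1 (z - v * t))"
      by (rule ext) (simp add: pdy_def DERIV_imp_deriv[OF sa])
    have pb: "(\<lambda>z. pdy c2 t z) = (\<lambda>z. b1 (z - v * t))"
      by (rule ext) (simp add: pdy_def DERIV_imp_deriv[OF sb])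
    have sa1: "((\<lambda>z. pdy c1 t z) has_real_derivative a2 (y - v * t)) (at y)"
      unfolding pa by (rule shift_der[OF da1])
    have sb1: "((\<lambda>z. pdy c2 t z) has_real_derivative b2 (y - v * t)) (at y)"
      unfolding pb by (rule shift_der[OF db1])
    show "(\<lambda>z. c1 t z) differentiable (at y)" using sa by (auto simp: real_differentiable_def)
    show "(\<lambda>z. c2 t z) differentiable (at y)" using sb by (auto simp: real_differentiable_def)
    show "(\<lambda>z. pdy c1 t z) differentiable (at y)" using sa1 by (auto simp: real_differentiable_def)
    show "(\<lambda>z. pdy c2 t z) differentiable (at y)" using sb1 by (auto simp: real_differentiable_def)
    define x where "x = y - v * t"
    have ta: "((\<lambda>s. c1 s y) has_real_derivative a1 x * (- v)) (at t within {0..})"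
    proof -
      have "((\<lambda>s. y - v * s) has_real_derivative - v) (at t)" by (auto intro!: derivative_eq_intros)
      from DERIV_chain2[where g="\<lambda>s. y - v * s" and x=t, OF da this] show ?thesis
        by (auto simp: c1_def x_def intro: has_field_derivative_at_within)
    qed
    have tb: "((\<lambda>s. c2 s y) has_real_derivative b1 x * (- v)) (at t within {0..})"
    proof -
      have "((\<lambda>s. y - v * s) has_real_derivative - v) (at t)" by (auto intro!: derivative_eq_intros)
      from DERIV_chain2[where g="\<lambda>s. y - v * s" and x=t, OF db this] show ?thesis
        by (auto simp: c2_def x_def intro: has_field_derivative_at_within)
    qed
    have u1: "(\<lambda>z. tfe_u1 c1 c2 t z) = (\<lambda>z. (b (z - v * t) - a (z - v * t)) / 2)"
      by (auto simp: tfe_u1_def c1_def c2_def)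
    have da': "((\<lambda>z. a (z - v * t)) has_real_derivative a1 x) (at y)" using shift_der[OF da] by (simp add: x_def)
    have db': "((\<lambda>z. b (z - v * t)) has_real_derivative b1 x) (at y)" using shift_der[OF db] by (simp add: x_def)
    have p1: "pdy (\<lambda>s z. tfe_u1 c1 c2 s z * c1 s z) t y = (b1 x - a1 x) / 2 * a x + (b x - a x) / 2 * a1 x"
      unfolding pdy_def tfe_u1_def c1_def c2_def
      by (rule DERIV_imp_deriv) (auto intro!: derivative_eq_intros da' db' simp: c1_def x_def)
    have p2: "pdy (\<lambda>s z. - tfe_u1 c1 c2 s z * c2 s z) t y = - ((b1 x - a1 x) / 2) * b x + - ((b x - a x) / 2) * b1 x"
      unfolding pdy_def tfe_u1_def c1_def c2_def
      by (rule DERIV_imp_deriv) (auto intro!: derivative_eq_intros da' db' simp: x_def c2_def, simp add: field_simps)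
    have pp: "pdy (pdy c1) t y = a2 x" "pdy (pdy c2) t y = b2 x"
      using DERIV_imp_deriv[OF sa1] DERIV_imp_deriv[OF sb1] by (auto simp: pdy_def[of "pdy _"] x_def)
    have pu: "pdy (tfe_u1 c1 c2) t y = (b1 x - a1 x) / 2"
      unfolding pdy_def tfe_u1_def c1_def c2_def
      by (rule DERIV_imp_deriv) (auto intro!: derivative_eq_intros da' db')
    have f: "tfe_f c1 c2 t y = (if (b1 x - a1 x) / 2 \<le> 0 then - ((b1 x - a1 x) / 2) * a x else - ((b1 x - a1 x) / 2) * b x)"
      unfolding tfe_f_def pu Let_def by (simp add: c1_def c2_def x_def)
    show "\<exists>D1 D2. ((\<lambda>s. c1 s y) has_real_derivative D1) (at t within {0..}) \<and>
           ((\<lambda>s. c2 s y) has_real_derivative D2) (at t within {0..}) \<and>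
           D1 + pdy (\<lambda>s z. tfe_u1 c1 c2 s z * c1 s z) t y - pdy (pdy c1) t y = - tfe_f c1 c2 t y \<and>
           D2 + pdy (\<lambda>s z. - tfe_u1 c1 c2 s z * c2 s z) t y - pdy (pdy c2) t y = tfe_f c1 c2 t y"
    proof (intro exI conjI)
      show "a1 x * (- v) + pdy (\<lambda>s z. tfe_u1 c1 c2 s z * c1 s z) t y - pdy (pdy c1) t y = - tfe_f c1 c2 t y"
        unfolding p1 pp f ea[of x] by (auto simp: field_simps)
      show "b1 x * (- v) + pdy (\<lambda>s z. - tfe_u1 c1 c2 s z * c2 s z) t y - pdy (pdy c2) t y = tfe_f c1 c2 t y"
        unfolding p2 pp f eb[of x] by (auto simp: field_simps)
    qed (rule ta, rule tb)
  qed
  thus ?thesis by (simp add: c1_def c2_def)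
qed

lemma ode2_swap: "ode2 v a a1 a2 b b1 b2 \<Longrightarrow> ode2 v b b1 b2 a a1 a2"
  unfolding ode2_def
proof (intro allI)
  fix x
  assume h: "\<forall>x. (a has_real_derivative a1 x) (at x) \<and> (a1 has_real_derivative a2 x) (at x) \<and>
         (b has_real_derivative b1 x) (at x) \<and> (b1 has_real_derivative b2 x) (at x) \<and>
         a2 x = ((b x - a x) / 2 - v) * a1 x - (if b1 x - a1 x \<le> 0 then 0 else (b x - a x) * (b1 x - a1 x) / 2) \<and>
         b2 x = - ((b x - a x) / 2 + v) * b1 x - (if b1 x - a1 x \<le> 0 then (b x - a x) * (b1 x - a1 x) / 2 else 0)"
  from h[rule_format, of x] show "(b has_real_derivative b1 x) (at x) \<and> (b1 has_real_derivative b2 x) (at x) \<and>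
         (a has_real_derivative a1 x) (at x) \<and> (a1 has_real_derivative a2 x) (at x) \<and>
         b2 x = ((a x - b x) / 2 - v) * b1 x - (if a1 x - b1 x \<le> 0 then 0 else (a x - b x) * (a1 x - b1 x) / 2) \<and>
         a2 x = - ((a x - b x) / 2 + v) * a1 x - (if a1 x - b1 x \<le> 0 then (a x - b x) * (a1 x - b1 x) / 2 else 0)"
  proof -
    from h[rule_format, of x] have
      d: "(b has_real_derivative b1 x) (at x) \<and> (b1 has_real_derivative b2 x) (at x) \<and>
         (a has_real_derivative a1 x) (at x) \<and> (a1 has_real_derivative a2 x) (at x)"
      and e1: "a2 x = ((b x - a x) / 2 - v) * a1 x - (if b1 x - a1 x \<le> 0 then 0 else (b x - a x) * (b1 x - a1 x) / 2)"
      and e2: "b2 x = - ((b x - a x) / 2 + v) * b1 x - (if b1 x - a1 x \<le> 0 then (b x - a x) * (b1 x - a1 x) / 2 else 0)"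
      by blast+
    consider "b1 x < a1 x" | "b1 x = a1 x" | "b1 x > a1 x" by linarith
    hence "b2 x = ((a x - b x) / 2 - v) * b1 x - (if a1 x - b1 x \<le> 0 then 0 else (a x - b x) * (a1 x - b1 x) / 2) \<and>
         a2 x = - ((a x - b x) / 2 + v) * a1 x - (if a1 x - b1 x \<le> 0 then (a x - b x) * (a1 x - b1 x) / 2 else 0)"
      by cases (simp_all only: e1 e2; simp add: field_simps)+
    with d show ?thesis by blast
  qed
qed

lemma pos_near:
  fixes f :: "real \<Rightarrow> real"
  assumes "isCont f x" "f x > 0"
  shows "\<exists>d>0. \<forall>y. \<bar>y - x\<bar> < d \<longrightarrow> f y > 0"
proof -
  from LIM_fun_gt_zero[of f "f x" x] assms obtain r where "r > 0" "\<forall>y. y \<noteq> x \<and> \<bar>x - y\<bar> < r \<longrightarrow> 0 < f y"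
    by (auto simp: isCont_def)
  thus ?thesis using assms(2) by (intro exI[of _ r]) (auto simp: abs_minus_commute)
qed

lemma alg_bound:
  fixes w v p q M :: real
  assumes "\<bar>w\<bar> \<le> 2 * M"
  shows "\<bar>(w/2 - v) * p - (if c then 0 else w * (q - p) / 2)\<bar> \<le> (2 * M + \<bar>v\<bar>) * (\<bar>p\<bar> + \<bar>q\<bar>)"
proof -
  have M: "M \<ge> 0" using assms by linarith
  have "\<bar>w/2 - v\<bar> \<le> M + \<bar>v\<bar>" using assms by linarith
  hence 1: "\<bar>(w/2 - v) * p\<bar> \<le> (M + \<bar>v\<bar>) * \<bar>p\<bar>" by (simp add: abs_mult mult_right_mono)
  have "\<bar>q - p\<bar> \<le> \<bar>p\<bar> + \<bar>q\<bar>" by linarith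
  hence "\<bar>w\<bar> * \<bar>q - p\<bar> \<le> (2 * M) * (\<bar>p\<bar> + \<bar>q\<bar>)" using assms by (intro mult_mono) auto
  hence 2: "\<bar>(if c then 0 else w * (q - p) / 2)\<bar> \<le> M * (\<bar>p\<bar> + \<bar>q\<bar>)" using M by (auto simp: abs_mult)
  have "\<bar>(w/2 - v) * p - (if c then 0 else w * (q - p) / 2)\<bar> \<le> (M + \<bar>v\<bar>) * \<bar>p\<bar> + M * (\<bar>p\<bar> + \<bar>q\<bar>)"
    using 1 2 by linarith
  also have "\<dots> \<le> (2 * M + \<bar>v\<bar>) * (\<bar>p\<bar> + \<bar>q\<bar>)" using M by (simp add: algebra_simps)
  finally show ?thesis .
qed

lemma sq_bound:
  fixes p q p' q' K :: real
  assumes "\<bar>p'\<bar> \<le> K * (\<bar>p\<bar> + \<bar>q\<bar>)" "\<bar>q'\<bar> \<le> K * (\<bar>p\<bar> + \<bar>q\<bar>)" and K: "K \<ge> 0"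
  shows "\<bar>2 * p * p' + 2 * q * q'\<bar> \<le> (4 * K) * (p^2 + q^2)"
proof -
  have "\<bar>2 * p * p' + 2 * q * q'\<bar> \<le> 2 * \<bar>p\<bar> * \<bar>p'\<bar> + 2 * \<bar>q\<bar> * \<bar>q'\<bar>"
    by (rule order_trans[OF abs_triangle_ineq]) (simp add: abs_mult)
  also have "\<dots> \<le> 2 * \<bar>p\<bar> * (K * (\<bar>p\<bar> + \<bar>q\<bar>)) + 2 * \<bar>q\<bar> * (K * (\<bar>p\<bar> + \<bar>q\<bar>))"
    using assms by (intro add_mono mult_left_mono) auto
  also have "\<dots> = 2 * K * (\<bar>p\<bar> + \<bar>q\<bar>)^2" by (simp add: power2_eq_square algebra_simps)
  also have "\<dots> \<le> 2 * K * (2 * (p^2 + q^2))"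
  proof -
    have "0 \<le> (\<bar>p\<bar> - \<bar>q\<bar>)^2" by simp
    hence "(\<bar>p\<bar> + \<bar>q\<bar>)^2 \<le> 2 * (p^2 + q^2)" by (simp add: power2_eq_square algebra_simps)
    thus ?thesis using K by (intro mult_left_mono) auto
  qed
  finally show ?thesis by (simp add: algebra_simps)
qed

lemma b2_alt: "(b2::real) = - ((b - a)/2 + v) * b1 - (if b1 - a1 \<le> 0 then (b - a) * (b1 - a1) / 2 else 0) \<Longrightarrow> ((a - b) / 2 - v) * b1 - (if a1 - b1 \<le> 0 then 0 else (a - b) * (a1 - b1) / 2) = b2"
  by (cases "b1 < a1"; cases "b1 = a1") (simp_all add: field_simps)

lemma lin_unbounded:
  fixes f :: "real \<Rightarrow> real"
  assumes grow: "\<And>x. x \<ge> X \<Longrightarrow> f x \<ge> f X + c * (x - X)" and c: "c > 0" and M: "\<And>x. \<bar>f x\<bar> \<le> M"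
  shows False
proof -
  define x where "x = X + (2 * M + 1) / c"
  have M0: "M \<ge> 0" using M[of 0] by linarith
  have "x \<ge> X" using M0 c by (simp add: x_def)
  have "c * (x - X) = 2 * M + 1" using c by (simp add: x_def)
  hence "f x \<ge> f X + 2 * M + 1" using grow[OF \<open>x \<ge> X\<close>] by linarith
  thus False using M[of x] M[of X] by linarith
qed

locale tws =
  fixes v :: real and a a1 a2 b b1 b2 :: "real \<Rightarrow> real" and A B :: real
  assumes ode: "ode2 v a a1 a2 b b1 b2"
    and la: "(a \<longlongrightarrow> -1) at_bot" and lb: "(b \<longlongrightarrow> -1) at_bot"
    and ta: "(a \<longlongrightarrow> A) at_top" and tb: "(b \<longlongrightarrow> B) at_top"
begin

lemma swap: "tws v b b1 b2 a a1 a2 B A"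
  using ode2_swap[OF ode] la lb ta tb by unfold_locales auto

lemma da: "\<And>x. (a has_real_derivative a1 x) (at x)" and da1: "\<And>x. (a1 has_real_derivative a2 x) (at x)"
  and db: "\<And>x. (b has_real_derivative b1 x) (at x)" and db1: "\<And>x. (b1 has_real_derivative b2 x) (at x)"
  using ode unfolding ode2_def by blast+

lemma ea: "\<And>x. a2 x = ((b x - a x)/2 - v) * a1 x - (if b1 x - a1 x \<le> 0 then 0 else (b x - a x) * (b1 x - a1 x) / 2)"
  and eb: "\<And>x. b2 x = - ((b x - a x)/2 + v) * b1 x - (if b1 x - a1 x \<le> 0 then (b x - a x) * (b1 x - a1 x) / 2 else 0)"
  using ode unfolding ode2_def by blast+

lemma ca: "continuous_on UNIV a" and ca1: "continuous_on UNIV a1"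
  and cb: "continuous_on UNIV b" and cb1: "continuous_on UNIV b1"
  using da da1 db db1 by (auto intro!: continuous_at_imp_continuous_on DERIV_isCont)

lemma bnd: "\<exists>M. \<forall>x. \<bar>a x\<bar> \<le> M \<and> \<bar>b x\<bar> \<le> M"
proof -
  obtain M1 where "\<forall>x. \<bar>a x\<bar> \<le> M1" using bounded_lim2[OF ca la ta] by blast
  moreover obtain M2 where "\<forall>x. \<bar>b x\<bar> \<le> M2" using bounded_lim2[OF cb lb tb] by blast
  ultimately show ?thesis by (metis max.cobounded1 max.cobounded2 order_trans)
qed

lemma first_int: "a1 x + b1 x = - v * (a x + b x + 2) - (b x - a x)^2 / 2"
proof -
  define h where "h x = a1 x + b1 x + v * (a x + b x + 2) + (b x - a x)^2 / 2" for x
  have "\<And>x. (h has_real_derivative 0) (at x)"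
  proof -
    fix x
    have "(h has_real_derivative (a2 x + b2 x + v * (a1 x + b1 x + 0) + 2 * (b x - a x) * (b1 x - a1 x) / 2)) (at x)"
      unfolding h_def by (auto intro!: derivative_eq_intros da da1 db db1 simp: power2_eq_square)
    moreover have "a2 x + b2 x + v * (a1 x + b1 x + 0) + 2 * (b x - a x) * (b1 x - a1 x) / 2 = 0"
      unfolding ea[of x] eb[of x] by (auto simp: field_simps)
    ultimately show "(h has_real_derivative 0) (at x)" by simp
  qed
  hence hc: "\<And>x. h x = h 0" using DERIV_isconst_all by blast
  have lim0: "((\<lambda>x. v * (a x + b x + 2) + (b x - a x)^2 / 2) \<longlongrightarrow> v * (-1 + -1 + 2) + (-1 - -1)^2/2) at_bot"
    by (intro tendsto_intros la lb) simp
  have "((\<lambda>x. h 0 - (v * (a x + b x + 2) + (b x - a x)^2 / 2)) \<longlongrightarrow> h 0 - 0) at_bot"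
    using lim0 by (intro tendsto_intros) auto
  moreover have "\<And>x. h 0 - (v * (a x + b x + 2) + (b x - a x)^2 / 2) = a1 x + b1 x"
  proof -
    fix x
    have "h x = h 0" by (rule hc)
    thus "h 0 - (v * (a x + b x + 2) + (b x - a x)^2 / 2) = a1 x + b1 x" unfolding h_def[of x] by linarith
  qed
  ultimately have l1: "((\<lambda>x. a1 x + b1 x) \<longlongrightarrow> h 0) at_bot" by simp
  have "((\<lambda>x. a x + b x) \<longlongrightarrow> -1 + -1) at_bot" by (intro tendsto_intros la lb)
  from deriv_lim_bot[of "\<lambda>x. a x + b x" "\<lambda>x. a1 x + b1 x", OF _ this l1] have "h 0 = 0"
    by (auto intro!: derivative_eq_intros da db)
  moreover have "h x = h 0" by (rule hc)
  ultimately show ?thesis unfolding h_def[of x] by linarith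
qed

lemma dP: "((\<lambda>x. (3 * a1 x - b1 x) / 2) has_real_derivative
   ((- v + (b x - a x)) * ((3 * a1 x - b1 x) / 2) + (if b1 x - a1 x \<le> 0 then (b x - a x) * (b1 x - a1 x) else 0))) (at x)"
proof -
  have "((\<lambda>x. (3 * a1 x - b1 x) / 2) has_real_derivative (3 * a2 x - b2 x) / 2) (at x)"
    by (auto intro!: derivative_eq_intros da1 db1)
  moreover have "(3 * a2 x - b2 x) / 2 = (- v + (b x - a x)) * ((3 * a1 x - b1 x) / 2) + (if b1 x - a1 x \<le> 0 then (b x - a x) * (b1 x - a1 x) else 0)"
    unfolding ea[of x] eb[of x] by (auto simp: field_simps)
  ultimately show ?thesis by simp
qed

lemma wbnd: "\<exists>M. \<forall>x. \<bar>b x - a x\<bar> \<le> 2 * M \<and> \<bar>a x\<bar> \<le> M \<and> \<bar>b x\<bar> \<le> M"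
proof -
  obtain M where "\<forall>x. \<bar>a x\<bar> \<le> M \<and> \<bar>b x\<bar> \<le> M" using bnd by blast
  moreover have "\<bar>b x - a x\<bar> \<le> \<bar>b x\<bar> + \<bar>a x\<bar>" for x by (rule abs_triangle_ineq4)
  ultimately show ?thesis by (intro exI[of _ M]) (smt (verit))
qed

lemma Zlem:
  assumes "a1 x0 = 0" "b1 x0 = 0"
  shows "a1 x = 0 \<and> b1 x = 0"
proof -
  obtain M where M: "\<And>x. \<bar>b x - a x\<bar> \<le> 2 * M" using wbnd by blast
  define f where "f x = (a1 x)^2 + (b1 x)^2" for x
  have der: "\<And>x. (f has_real_derivative (2 * a1 x * a2 x + 2 * b1 x * b2 x)) (at x)"
    unfolding f_def by (auto intro!: derivative_eq_intros da1 db1)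
  have ba: "\<bar>a2 x\<bar> \<le> (2 * M + \<bar>v\<bar>) * (\<bar>a1 x\<bar> + \<bar>b1 x\<bar>)" for x
    unfolding ea[of x] by (rule alg_bound[OF M])
  have bb: "\<bar>b2 x\<bar> \<le> (2 * M + \<bar>v\<bar>) * (\<bar>a1 x\<bar> + \<bar>b1 x\<bar>)" for x
  proof -
    have "\<bar>a x - b x\<bar> \<le> 2 * M" using M[of x] by (simp add: abs_minus_commute)
    from alg_bound[OF this, where v=v and p="b1 x" and q="a1 x" and c="a1 x - b1 x \<le> 0"]
    have "\<bar>((a x - b x) / 2 - v) * b1 x - (if a1 x - b1 x \<le> 0 then 0 else (a x - b x) * (a1 x - b1 x) / 2)\<bar>
       \<le> (2 * M + \<bar>v\<bar>) * (\<bar>b1 x\<bar> + \<bar>a1 x\<bar>)" .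
    moreover have "((a x - b x) / 2 - v) * b1 x - (if a1 x - b1 x \<le> 0 then 0 else (a x - b x) * (a1 x - b1 x) / 2) = b2 x"
      using eb[of x] by (rule b2_alt)
    ultimately show ?thesis by (simp add: add.commute)
  qed
  have fb: "\<bar>2 * a1 x * a2 x + 2 * b1 x * b2 x\<bar> \<le> (4 * (2 * M + \<bar>v\<bar>)) * f x" for x
    unfolding f_def by (rule sq_bound[OF ba bb]) (use M[of x] in linarith)
  have "f x = 0"
    apply (rule gronwall_zero_UNIV[where f=f and f'="\<lambda>x. 2 * a1 x * a2 x + 2 * b1 x * b2 x" and K="4 * (2 * M + \<bar>v\<bar>)" and ?x0.0=x0])
    apply (rule der) apply (rule fb) apply (simp add: f_def) apply (simp add: f_def assms) done
  thus ?thesis unfolding f_def by (simp add: add_nonneg_eq_0_iff)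
qed

lemma LP:
  assumes "3 * a1 x0 - b1 x0 = 0" "b1 x0 - a1 x0 > 0"
  shows "\<exists>d>0. \<forall>x. \<bar>x - x0\<bar> < d \<longrightarrow> 3 * a1 x - b1 x = 0"
proof -
  obtain M where M: "\<And>x. \<bar>b x - a x\<bar> \<le> 2 * M" using wbnd by blast
  have "isCont (\<lambda>x. b1 x - a1 x) x0" by (rule isCont_diff[OF DERIV_isCont[OF db1] DERIV_isCont[OF da1]])
  from pos_near[OF this assms(2)] obtain d where d: "d > 0" "\<And>y. \<bar>y - x0\<bar> < d \<Longrightarrow> b1 y - a1 y > 0"
    by blast
  define P where "P x = (3 * a1 x - b1 x) / 2" for x
  define f where "f x = (P x)^2" for x
  have der: "(f has_real_derivative (2 * P x * ((- v + (b x - a x)) * P x))) (at x)" if "x0 - d < x" "x < x0 + d" for x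
  proof -
    have "\<bar>x - x0\<bar> < d" using that by linarith
    hence "\<not> b1 x - a1 x \<le> 0" using d by force
    hence "(P has_real_derivative ((- v + (b x - a x)) * P x)) (at x)"
      using dP[of x] unfolding P_def by simp
    thus ?thesis unfolding f_def by (auto intro!: derivative_eq_intros)
  qed
  have fb: "\<bar>2 * P x * ((- v + (b x - a x)) * P x)\<bar> \<le> (2 * (\<bar>v\<bar> + 2 * M)) * f x" for x
  proof -
    have "\<bar>- v + (b x - a x)\<bar> \<le> \<bar>v\<bar> + 2 * M" using M[of x] by linarith
    hence "\<bar>- v + (b x - a x)\<bar> * (P x)^2 \<le> (\<bar>v\<bar> + 2 * M) * (P x)^2" by (intro mult_right_mono) auto
    moreover have "\<bar>2 * P x * ((- v + (b x - a x)) * P x)\<bar> = 2 * (\<bar>- v + (b x - a x)\<bar> * (P x)^2)"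
      by (simp add: abs_mult power2_eq_square)
    moreover have "(2 * (\<bar>v\<bar> + 2 * M)) * f x = 2 * ((\<bar>v\<bar> + 2 * M) * (P x)^2)" by (simp add: f_def)
    ultimately show ?thesis by linarith
  qed
  have "f x = 0" if "\<bar>x - x0\<bar> < d" for x
    by (rule gronwall_zero[of "x0 - d" "x0 + d" f _ "2 * (\<bar>v\<bar> + 2 * M)" x0])
      (use der fb that d assms(1) in \<open>auto simp: f_def P_def\<close>)
  thus ?thesis using d by (intro exI[of _ d]) (auto simp: f_def P_def)
qed

lemma Dbound: "\<exists>M. \<forall>x. \<bar>3 * a x - b x\<bar> \<le> M"
proof -
  obtain M where M: "\<forall>x. \<bar>a x\<bar> \<le> M \<and> \<bar>b x\<bar> \<le> M" using bnd by blast
  have "\<bar>3 * a x - b x\<bar> \<le> 4 * M" for x using M[rule_format, of x] by linarith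
  thus ?thesis by blast
qed

lemma allpos_half:
  assumes pos: "\<forall>x. 3 * a1 x - b1 x > 0 \<and> 3 * b1 x - a1 x > 0" and v: "v \<le> 0" and AB: "B - A > 0"
  shows False
proof -
  have "((\<lambda>x. b x - a x) \<longlongrightarrow> B - A) at_top" by (intro tendsto_intros tb ta)
  hence "eventually (\<lambda>x. 0 < b x - a x) at_top" using AB order_tendstoD(1) by blast
  then obtain X where X: "\<And>x. x \<ge> X \<Longrightarrow> b x - a x > 0" by (auto simp: eventually_at_top_linorder)
  define P where "P x = (3 * a1 x - b1 x) / 2" for x
  define P' where "P' x = (- v + (b x - a x)) * ((3 * a1 x - b1 x) / 2) + (if b1 x - a1 x \<le> 0 then (b x - a x) * (b1 x - a1 x) else 0)" for x
  have dP': "(P has_real_derivative P' x) (at x)" for x unfolding P_def P'_def by (rule dP)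
  have P'nn: "P' x \<ge> 0" if "x \<ge> X" for x
  proof -
    define w where "w = b x - a x"
    have w: "w > 0" using X[OF that] by (simp add: w_def)
    have Pp: "P x > 0" "3 * b1 x - a1 x > 0" using pos by (auto simp: P_def)
    have 1: "(- v + w) * P x \<ge> w * P x" using v Pp by (intro mult_right_mono) auto
    have "b1 x - a1 x \<ge> - P x / 2" unfolding P_def using Pp(2) by (simp add: field_simps)
    hence 2: "w * (b1 x - a1 x) \<ge> w * (- P x / 2)" using w by (intro mult_left_mono) auto
    have 3: "w * P x > 0" using w Pp by simp
    show ?thesis using 1 2 3 unfolding P'_def w_def[symmetric] P_def[symmetric] by (auto simp: algebra_simps)
  qed
  have Pmono: "P x \<ge> P X" if "x \<ge> X" for x
  proof (cases "x = X")
    case False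
    hence "X < x" using that by simp
    from MVT2[OF this, of P P'] dP' obtain z where "X < z" "z < x" "P x - P X = (x - X) * P' z" by blast
    moreover have "P' z \<ge> 0" using P'nn \<open>X < z\<close> by simp
    hence "(x - X) * P' z \<ge> 0" using \<open>X < x\<close> by (intro mult_nonneg_nonneg) auto
    ultimately show ?thesis by linarith
  qed simp
  have PX: "P X > 0" using pos by (simp add: P_def)
  obtain M where M: "\<And>x. \<bar>3 * a x - b x\<bar> \<le> M" using Dbound by blast
  have dD: "((\<lambda>x. 3 * a x - b x) has_real_derivative 2 * P x) (at x)" for x
    unfolding P_def by (auto intro!: derivative_eq_intros da db)
  show False
  proof (rule lin_unbounded[where f="\<lambda>x. 3 * a x - b x" and X=X and c="2 * P X", OF _ _ M])
    fix x assume "x \<ge> X"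
    show "3 * a x - b x \<ge> 3 * a X - b X + 2 * P X * (x - X)"
    proof (cases "x = X")
      case False
      hence "X < x" using \<open>x \<ge> X\<close> by simp
      from MVT2[OF this, of "\<lambda>x. 3 * a x - b x" "\<lambda>x. 2 * P x"] dD obtain z where
        "X < z" "z < x" "3 * a x - b x - (3 * a X - b X) = (x - X) * (2 * P z)" by blast
      moreover have "2 * P z \<ge> 2 * P X" using Pmono \<open>X < z\<close> by simp
      ultimately show ?thesis using \<open>X < x\<close> by (smt (verit) mult_left_mono mult.commute)
    qed simp
  qed (use PX in simp)
qed

lemma allpos:
  assumes pos: "\<forall>x. 3 * a1 x - b1 x > 0 \<and> 3 * b1 x - a1 x > 0" and v: "v \<le> 0"
  shows False
proof -
  have s1: "a1 x + b1 x > 0" for x using pos[rule_format, of x] by linarith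
  have ds: "((\<lambda>x. a x + b x) has_real_derivative a1 x + b1 x) (at x)" for x
    by (auto intro!: derivative_eq_intros da db)
  have smono: "a x + b x \<le> a y + b y" if "x \<le> y" for x y
  proof (cases "x = y")
    case False
    hence "x < y" using that by simp
    from MVT2[OF this, of "\<lambda>x. a x + b x" "\<lambda>x. a1 x + b1 x"] ds obtain z where
      "a y + b y - (a x + b x) = (y - x) * (a1 z + b1 z)" by blast
    moreover have "a1 z + b1 z > 0" by (rule s1)
    ultimately show ?thesis using \<open>x < y\<close> by (smt (verit) mult_pos_pos)
  qed simp
  have sm1: "a (-1) + b (-1) < a 0 + b 0"
  proof -
    from MVT2[of "-1" 0 "\<lambda>x. a x + b x" "\<lambda>x. a1 x + b1 x"] ds obtain z where
      "a 0 + b 0 - (a (-1) + b (-1)) = (0 - (-1)) * (a1 z + b1 z)" by force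
    thus ?thesis using s1[of z] by simp
  qed
  have "((\<lambda>x. a x + b x) \<longlongrightarrow> -1 + -1) at_bot" by (intro tendsto_intros la lb)
  hence "-1 + -1 \<le> a (-1) + b (-1)"
    by (rule tendsto_upperbound) (auto simp: eventually_at_bot_linorder intro!: exI[of _ "-1"] smono)
  hence l1: "-2 \<le> a (-1) + b (-1)" by simp
  have tab: "((\<lambda>x. a x + b x) \<longlongrightarrow> A + B) at_top" by (intro tendsto_intros ta tb)
  hence l2: "a 0 + b 0 \<le> A + B"
    by (rule tendsto_lowerbound) (auto simp: eventually_at_top_linorder intro!: exI[of _ 0] smono)
  have ABpos: "A + B + 2 > 0" using l1 l2 sm1 by linarith
  have "((\<lambda>x. - v * (a x + b x + 2) - (b x - a x)^2 / 2) \<longlongrightarrow> - v * (A + B + 2) - (B - A)^2 / 2) at_top"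
    by (auto intro!: tendsto_intros ta tb)
  hence "((\<lambda>x. a1 x + b1 x) \<longlongrightarrow> - v * (A + B + 2) - (B - A)^2 / 2) at_top"
    using first_int by simp
  from deriv_lim_top[OF ds tab this] have k: "- v * (A + B + 2) - (B - A)^2 / 2 = 0" .
  consider "B - A > 0" | "A - B > 0" | "B = A" by linarith
  thus False
  proof cases
    case 1 thus False using allpos_half[OF pos v] by simp
  next
    case 2 thus False using tws.allpos_half[OF swap, of] pos v by auto
  next
    case 3
    hence "v * (A + B + 2) = 0" using k by simp
    hence "v = 0" using ABpos by simp
    hence "a1 0 + b1 0 \<le> 0" using first_int[of 0] by simp
    thus False using s1[of 0] by simp
  qed
qed

lemma S1:
  assumes bad: "\<forall>x. 3 * a1 x - b1 x < 0 \<or> 3 * b1 x - a1 x < 0" and v: "v \<le> 0" and u0: "b xa - a xa > 0"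
  shows False
proof -
  define u where "u x = b x - a x" for x
  have du: "(u has_real_derivative (b1 x - a1 x)) (at x)" for x
    unfolding u_def by (auto intro!: derivative_eq_intros da db)
  have cu: "continuous_on UNIV u" unfolding u_def by (intro continuous_intros ca cb)
  have "(u \<longlongrightarrow> 0) at_bot" unfolding u_def using tendsto_diff[OF lb la] by simp
  from order_tendstoD(2)[OF this, of "u xa / 2"] u0 have "eventually (\<lambda>x. u x < u xa / 2) at_bot"
    by (simp add: u_def)
  then obtain X where X: "\<And>x. x \<le> X \<Longrightarrow> u x < u xa / 2" by (auto simp: eventually_at_bot_linorder)
  define x4 where "x4 = min X xa"
  have "u x4 \<le> u xa / 2" using X[of x4] by (simp add: x4_def)
  from last_below[OF continuous_on_subset[OF cu] this, of xa] u0 obtain m where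
    m: "x4 \<le> m" "m < xa" "u m \<le> u xa / 2" "\<And>s. m < s \<Longrightarrow> s \<le> xa \<Longrightarrow> u s > u xa / 2"
    by (auto simp: x4_def u_def)
  from MVT2[OF m(2), of u "\<lambda>x. b1 x - a1 x"] du obtain xi where
    xi: "m < xi" "xi < xa" "u xa - u m = (xa - m) * (b1 xi - a1 xi)" by blast
  have "(xa - m) * (b1 xi - a1 xi) > 0" using xi(3) m(3) u0 by (simp add: u_def)
  hence uyxi: "b1 xi - a1 xi > 0" using m(2) by (simp add: zero_less_mult_iff)
  have uxi: "u xi > 0" using m(4)[of xi] xi u0 by (simp add: u_def)
  have Pxi: "3 * a1 xi - b1 xi < 0" using bad[rule_format, of xi] uyxi by linarith
  define P where "P x = (3 * a1 x - b1 x) / 2" for x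
  define P' where "P' x = (- v + (b x - a x)) * ((3 * a1 x - b1 x) / 2) + (if b1 x - a1 x \<le> 0 then (b x - a x) * (b1 x - a1 x) else 0)" for x
  have dP': "(P has_real_derivative P' x) (at x)" for x unfolding P_def P'_def by (rule dP)
  have P'neg: "P' x \<le> 0" if "3 * a1 x - b1 x < 0" "b1 x - a1 x > 0" "b x - a x > 0" for x
  proof -
    have "P' x = (- v + (b x - a x)) * ((3 * a1 x - b1 x) / 2)" using that(2) by (simp add: P'_def)
    also have "\<dots> \<le> 0" using that v by (intro mult_nonneg_nonpos) auto
    finally show ?thesis .
  qed
  have mono_step: "P y \<le> P xi \<and> u y > u xi"
    if y: "xi < y" and cond: "\<And>s. xi \<le> s \<Longrightarrow> s < y \<Longrightarrow> 3 * a1 s - b1 s < 0 \<and> b1 s - a1 s > 0 \<and> b s - a s > 0" for y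
  proof
    from MVT2[OF y, of P P'] dP' obtain z where z: "xi < z" "z < y" "P y - P xi = (y - xi) * P' z" by blast
    have "P' z \<le> 0" using cond[of z] z by (intro P'neg) auto
    hence "(y - xi) * P' z \<le> 0" using y by (intro mult_nonneg_nonpos) auto
    thus "P y \<le> P xi" using z(3) by linarith
    from MVT2[OF y, of u "\<lambda>x. b1 x - a1 x"] du obtain z where z: "xi < z" "z < y" "u y - u xi = (y - xi) * (b1 z - a1 z)" by blast
    have "b1 z - a1 z > 0" using cond[of z] z by auto
    hence "(y - xi) * (b1 z - a1 z) > 0" using y by simp
    thus "u y > u xi" using z(3) by linarith
  qed
  have inv: "3 * a1 y - b1 y < 0 \<and> b1 y - a1 y > 0 \<and> b y - a y > 0" if "y \<ge> xi" for y
  proof (rule ccontr)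
    assume nc: "\<not> (3 * a1 y - b1 y < 0 \<and> b1 y - a1 y > 0 \<and> b y - a y > 0)"
    define g where "g x = min (- (3 * a1 x - b1 x)) (min (b1 x - a1 x) (b x - a x))" for x
    have cg: "continuous_on {xi..y} g" unfolding g_def
      by (intro continuous_intros continuous_on_subset[OF ca] continuous_on_subset[OF cb]
          continuous_on_subset[OF ca1] continuous_on_subset[OF cb1]) auto
    have gxi: "g xi > 0" using Pxi uyxi uxi by (simp add: g_def u_def)
    have gy: "g y \<le> 0" using nc by (auto simp: g_def)
    from first_exit[OF cg gxi gy that] obtain t where
      t: "xi < t" "t \<le> y" "g t = 0" "\<And>s. xi \<le> s \<Longrightarrow> s < t \<Longrightarrow> g s > 0" by blast
    have cond: "3 * a1 s - b1 s < 0 \<and> b1 s - a1 s > 0 \<and> b s - a s > 0" if "xi \<le> s" "s < t" for s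
      using t(4)[OF that] by (auto simp: g_def)
    from mono_step[OF t(1) cond] have Pt: "P t < 0" and ut: "b t - a t > 0"
      using Pxi uxi by (auto simp: P_def u_def)
    have uyt: "b1 t - a1 t = 0"
    proof -
      have "min (- (3 * a1 t - b1 t)) (min (b1 t - a1 t) (b t - a t)) = 0" "(3 * a1 t - b1 t) / 2 < 0" "0 < b t - a t"
        using t(3) Pt ut unfolding g_def P_def by auto
      thus ?thesis by (simp add: min_def split: if_splits)
    qed
    have duy: "((\<lambda>x. b1 x - a1 x) has_real_derivative b2 t - a2 t) (at t)" by (auto intro!: derivative_eq_intros da1 db1)
    have eqt: "b2 t - a2 t = - (b t - a t) * a1 t"
      using uyt unfolding ea[of t] eb[of t] by (simp add: field_simps)
    have a1t: "a1 t < 0" using Pt uyt by (simp add: P_def)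
    have pp: "(b t - a t) * (- a1 t) > 0" using ut a1t by (intro mult_pos_pos) auto
    have "- (b t - a t) * a1 t = (b t - a t) * (- a1 t)" by (simp add: algebra_simps)
    hence pos: "b2 t - a2 t > 0" using eqt pp by linarith
    from DERIV_pos_inc_left[OF duy pos] obtain d where
      d: "d > 0" "\<And>h. h > 0 \<Longrightarrow> h < d \<Longrightarrow> b1 (t - h) - a1 (t - h) < b1 t - a1 t" by blast
    define h where "h = min d (t - xi) / 2"
    have mm: "min d (t - xi) \<le> t - xi" "min d (t - xi) \<le> d" "min d (t - xi) > 0" using d t(1) by auto
    have h: "h > 0" "h < d" "xi \<le> t - h" "t - h < t" using mm unfolding h_def by (auto simp: field_simps)
    have "b1 (t - h) - a1 (t - h) > 0" using cond[of "t - h"] h by auto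
    moreover have "b1 (t - h) - a1 (t - h) < 0" using d(2)[OF h(1) h(2)] uyt by simp
    ultimately show False by simp
  qed
  obtain M where M0: "\<And>x. \<bar>3 * a x - b x\<bar> \<le> M" using Dbound by blast
  have M: "\<bar>- (3 * a x - b x)\<bar> \<le> M" for x using M0[of x] by (simp only: abs_minus_cancel)
  have dD: "((\<lambda>x. - (3 * a x - b x)) has_real_derivative - (2 * P x)) (at x)" for x
    unfolding P_def by (auto intro!: derivative_eq_intros da db simp: field_simps)
  have PxiP: "P xi < 0" using Pxi by (simp add: P_def)
  show False
  proof (rule lin_unbounded[where f="\<lambda>x. - (3 * a x - b x)" and X=xi and c="- 2 * P xi", OF _ _ M])
    fix x assume "x \<ge> xi"
    show "- (3 * a x - b x) \<ge> - (3 * a xi - b xi) + - 2 * P xi * (x - xi)"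
    proof (cases "x = xi")
      case False
      hence "xi < x" using \<open>x \<ge> xi\<close> by simp
      from MVT2[OF this, of "\<lambda>x. - (3 * a x - b x)" "\<lambda>x. - (2 * P x)"] dD obtain z where
        z: "xi < z" "z < x" "- (3 * a x - b x) - (- (3 * a xi - b xi)) = (x - xi) * (- (2 * P z))" by blast
      have "P z \<le> P xi" using mono_step[of z] inv z by auto
      hence "(x - xi) * (- (2 * P z)) \<ge> (x - xi) * (- 2 * P xi)" using \<open>xi < x\<close> by (intro mult_left_mono) auto
      thus ?thesis using z(3) by (simp add: algebra_simps)
    qed simp
  qed (use PxiP in simp)
qed

lemma allbad:
  assumes bad: "\<forall>x. 3 * a1 x - b1 x < 0 \<or> 3 * b1 x - a1 x < 0" and v: "v \<le> 0"
  shows False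
proof (cases "\<exists>xa. b xa - a xa > 0")
  case True
  then obtain xa where "b xa - a xa > 0" by blast
  from S1[OF bad v this] show False .
next
  case F1: False
  show False
  proof (cases "\<exists>xa. a xa - b xa > 0")
    case True
    then obtain xa where xa: "a xa - b xa > 0" by blast
    have bad': "\<forall>x. 3 * b1 x - a1 x < 0 \<or> 3 * a1 x - b1 x < 0" using bad by blast
    from tws.S1[OF swap bad' v xa] show False .
  next
    case False
    have eq: "b x = a x" for x using F1 False by (meson linorder_neqE_linordered_idom diff_gt_0_iff_gt)
    have "((\<lambda>x. b x - a x) has_real_derivative b1 x - a1 x) (at x)" for x
      by (auto intro!: derivative_eq_intros da db)
    moreover have "(\<lambda>x. b x - a x) = (\<lambda>x. 0)" using eq by auto
    ultimately have "((\<lambda>x. 0) has_real_derivative b1 x - a1 x) (at x)" for x by metis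
    hence eq1: "b1 x = a1 x" for x using DERIV_unique[OF DERIV_const] by fastforce
    have neg: "a1 x < 0" for x using bad[rule_format, of x] eq1[of x] by linarith
    have fi: "a1 x = - v * (a x + 1)" for x using first_int[of x] eq[of x] eq1[of x] by (simp add: algebra_simps)
    show False
    proof (cases "v = 0")
      case True thus False using fi[of 0] neg[of 0] by simp
    next
      case False
      hence vn: "v < 0" using v by simp
      have aneg: "a x + 1 < 0" for x
      proof (rule ccontr)
        assume "\<not> a x + 1 < 0"
        hence "- v * (a x + 1) \<ge> 0" using vn by (intro mult_nonneg_nonneg) auto
        thus False using fi[of x] neg[of x] by simp
      qed
      have amono: "a y \<le> a 0" if "y \<ge> 0" for y
      proof (cases "y = 0")
        case False
        hence "0 < y" using that by simp
        from MVT2[OF this, of a a1] da obtain z where "a y - a 0 = (y - 0) * a1 z" by blast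
        moreover have "(y - 0) * a1 z \<le> 0" using neg[of z] \<open>0 < y\<close> by (intro mult_nonneg_nonpos) auto
        ultimately show ?thesis by linarith
      qed simp
      have "A \<le> a 0" by (rule tendsto_upperbound[OF ta]) (auto simp: eventually_at_top_linorder intro!: exI[of _ 0] amono)
      have fa: "a1 = (\<lambda>x. - v * (a x + 1))" using fi by (simp add: fun_eq_iff)
      have "(a1 \<longlongrightarrow> - v * (A + 1)) at_top" unfolding fa by (intro tendsto_intros ta)
      from deriv_lim_top[OF da ta this] have "- v * (A + 1) = 0" .
      hence "A = -1" using vn by simp
      thus False using \<open>A \<le> a 0\<close> aneg[of 0] by simp
    qed
  qed
qed

lemma classify:
  assumes v: "v \<le> 0"
  shows "(\<forall>x. 3 * a1 x - b1 x = 0) \<or> (\<forall>x. 3 * b1 x - a1 x = 0)"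
proof (cases "\<exists>xa. a1 xa = 0 \<and> b1 xa = 0")
  case True
  then obtain xa where "a1 xa = 0" "b1 xa = 0" by blast
  from Zlem[OF this] show ?thesis by simp
next
  case False
  hence nz: "a1 x \<noteq> 0 \<or> b1 x \<noteq> 0" for x by blast
  define P where "P x = 3 * a1 x - b1 x" for x
  define Q where "Q x = 3 * b1 x - a1 x" for x
  have PQnz: "\<not> (P x = 0 \<and> Q x = 0)" for x using nz[of x] by (auto simp: P_def Q_def)
  have cP: "continuous_on UNIV P" unfolding P_def by (intro continuous_intros ca1 cb1)
  have cQ: "continuous_on UNIV Q" unfolding Q_def by (intro continuous_intros ca1 cb1)
  have icP: "isCont P x" for x using cP by (simp add: continuous_on_eq_continuous_at)
  have icQ: "isCont Q x" for x using cQ by (simp add: continuous_on_eq_continuous_at)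
  have LP': "\<exists>d>0. \<forall>y. \<bar>y - x\<bar> < d \<longrightarrow> P y = 0 \<and> Q y > 0" if "P x = 0" "Q x > 0" for x
  proof -
    have "b1 x - a1 x > 0" using that by (simp add: P_def Q_def)
    from LP[OF _ this] that obtain d1 where d1: "d1 > 0" "\<And>y. \<bar>y - x\<bar> < d1 \<Longrightarrow> P y = 0"
      by (auto simp: P_def)
    from pos_near[OF icQ that(2)] obtain d2 where d2: "d2 > 0" "\<And>y. \<bar>y - x\<bar> < d2 \<Longrightarrow> Q y > 0" by blast
    show ?thesis using d1 d2 by (intro exI[of _ "min d1 d2"]) auto
  qed
  have LQ': "\<exists>d>0. \<forall>y. \<bar>y - x\<bar> < d \<longrightarrow> Q y = 0 \<and> P y > 0" if "Q x = 0" "P x > 0" for x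
  proof -
    have "a1 x - b1 x > 0" using that by (simp add: P_def Q_def)
    from tws.LP[OF swap _ this] that obtain d1 where d1: "d1 > 0" "\<And>y. \<bar>y - x\<bar> < d1 \<Longrightarrow> Q y = 0"
      by (auto simp: Q_def)
    from pos_near[OF icP that(2)] obtain d2 where d2: "d2 > 0" "\<And>y. \<bar>y - x\<bar> < d2 \<Longrightarrow> P y > 0" by blast
    show ?thesis using d1 d2 by (intro exI[of _ "min d1 d2"]) auto
  qed
  have openI_real: "open S" if "\<And>x. x \<in> S \<Longrightarrow> \<exists>d>0. \<forall>y. \<bar>y - x\<bar> < d \<longrightarrow> y \<in> S" for S :: "real set"
    unfolding open_dist dist_real_def using that by blast
  define Good where "Good = {x. 0 \<le> P x \<and> 0 \<le> Q x}"
  have "closed Good" unfolding Good_def Collect_conj_eq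
    by (intro closed_Int closed_Collect_le continuous_on_const cP cQ)
  moreover have "open Good"
  proof (rule openI_real)
    fix x assume "x \<in> Good"
    hence x: "P x \<ge> 0" "Q x \<ge> 0" by (auto simp: Good_def)
    consider "P x = 0" | "Q x = 0" | "P x > 0 \<and> Q x > 0" using x by linarith
    thus "\<exists>d>0. \<forall>y. \<bar>y - x\<bar> < d \<longrightarrow> y \<in> Good"
    proof cases
      case 1
      hence "Q x > 0" using x PQnz[of x] by linarith
      from LP'[OF 1 this] obtain d where "d > 0" "\<forall>y. \<bar>y - x\<bar> < d \<longrightarrow> P y = 0 \<and> Q y > 0" by blast
      thus ?thesis by (intro exI[of _ d]) (auto simp: Good_def less_imp_le)
    next
      case 2
      hence "P x > 0" using x PQnz[of x] by linarith
      from LQ'[OF 2 this] obtain d where "d > 0" "\<forall>y. \<bar>y - x\<bar> < d \<longrightarrow> Q y = 0 \<and> P y > 0" by blast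
      thus ?thesis by (intro exI[of _ d]) (auto simp: Good_def less_imp_le)
    next
      case 3
      from pos_near[OF icP] pos_near[OF icQ] 3 obtain d1 d2 where
        "d1 > 0" "\<And>y. \<bar>y - x\<bar> < d1 \<Longrightarrow> P y > 0" "d2 > 0" "\<And>y. \<bar>y - x\<bar> < d2 \<Longrightarrow> Q y > 0" by meson
      thus ?thesis by (intro exI[of _ "min d1 d2"]) (auto simp: Good_def intro: less_imp_le)
    qed
  qed
  ultimately have "Good = {} \<or> Good = UNIV" using clopen by blast
  thus ?thesis
  proof
    assume "Good = {}"
    hence "\<forall>x. 3 * a1 x - b1 x < 0 \<or> 3 * b1 x - a1 x < 0" by (auto simp: Good_def P_def Q_def not_le)
    from allbad[OF this v] show ?thesis ..
  next
    assume G: "Good = UNIV"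
    hence PQ: "P x \<ge> 0" "Q x \<ge> 0" for x by (auto simp: Good_def)
    define Zp where "Zp = {x. P x = 0}"
    define Zq where "Zq = {x. Q x = 0}"
    have "closed Zp" unfolding Zp_def by (intro closed_Collect_eq cP continuous_on_const)
    moreover have "open Zp"
    proof (rule openI_real)
      fix x assume "x \<in> Zp"
      hence "P x = 0" by (simp add: Zp_def)
      moreover hence "Q x > 0" using PQ[of x] PQnz[of x] by linarith
      ultimately obtain d where "d > 0" "\<forall>y. \<bar>y - x\<bar> < d \<longrightarrow> P y = 0 \<and> Q y > 0" using LP' by blast
      thus "\<exists>d>0. \<forall>y. \<bar>y - x\<bar> < d \<longrightarrow> y \<in> Zp" by (intro exI[of _ d]) (auto simp: Zp_def)
    qed
    ultimately have Zp: "Zp = {} \<or> Zp = UNIV" using clopen by blast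
    have "closed Zq" unfolding Zq_def by (intro closed_Collect_eq cQ continuous_on_const)
    moreover have "open Zq"
    proof (rule openI_real)
      fix x assume "x \<in> Zq"
      hence "Q x = 0" by (simp add: Zq_def)
      moreover hence "P x > 0" using PQ[of x] PQnz[of x] by linarith
      ultimately obtain d where "d > 0" "\<forall>y. \<bar>y - x\<bar> < d \<longrightarrow> Q y = 0 \<and> P y > 0" using LQ' by blast
      thus "\<exists>d>0. \<forall>y. \<bar>y - x\<bar> < d \<longrightarrow> y \<in> Zq" by (intro exI[of _ d]) (auto simp: Zq_def)
    qed
    ultimately have Zq: "Zq = {} \<or> Zq = UNIV" using clopen by blast
    show ?thesis
    proof (cases "Zp = UNIV \<or> Zq = UNIV")
      case True thus ?thesis by (auto simp: Zp_def Zq_def P_def Q_def set_eq_iff)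
    next
      case False
      hence "Zp = {}" "Zq = {}" using Zp Zq by auto
      hence "\<forall>x. 3 * a1 x - b1 x > 0 \<and> 3 * b1 x - a1 x > 0"
        using PQ by (auto simp: Zp_def Zq_def P_def Q_def set_eq_iff less_le)
      from allpos[OF this v] show ?thesis ..
    qed
  qed
qed

end

lemma ivt_zero:
  fixes f :: "real \<Rightarrow> real"
  assumes c: "continuous_on UNIV f" and p: "f p > 0" and q: "f q < 0"
  shows "\<exists>z. f z = 0"
proof (cases "p \<le> q")
  case True
  from IVT2'[of f q 0 p, OF _ _ True continuous_on_subset[OF c]] p q show ?thesis by auto
next
  case False
  hence "q \<le> p" by simp
  from IVT'[of f q 0 p, OF _ _ this continuous_on_subset[OF c]] p q show ?thesis by auto
qed

context tws begin

lemma logistic: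
  assumes v: "v \<le> 0" and P0: "\<forall>x. 3 * a1 x - b1 x = 0"
  shows "(\<forall>x. a x = -1 \<and> b x = -1) \<or>
    (v < 0 \<and> (\<exists>C>0. \<forall>x. a x = -1 + 2 * (- v) / (1 + C * exp (v * x)) \<and> b x = -1 + 6 * (- v) / (1 + C * exp (v * x))))"
proof -
  have b1a: "b1 x = 3 * a1 x" for x using P0[rule_format, of x] by linarith
  have dD: "((\<lambda>x. 3 * a x - b x) has_real_derivative 0) (at x)" for x
  proof -
    have "((\<lambda>x. 3 * a x - b x) has_real_derivative 3 * a1 x - b1 x) (at x)"
      by (auto intro!: derivative_eq_intros da db)
    thus ?thesis using b1a[of x] by simp
  qed
  hence Dc: "3 * a x - b x = 3 * a 0 - b 0" for x using DERIV_isconst_all by blast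
  have tl: "((\<lambda>x. 3 * a x - b x) \<longlongrightarrow> 3 * (-1) - (-1)) at_bot" by (intro tendsto_intros la lb)
  have feq: "(\<lambda>x. 3 * a x - b x) = (\<lambda>x::real. 3 * a 0 - b 0)" using Dc by (simp add: fun_eq_iff)
  have "((\<lambda>x::real. 3 * a 0 - b 0) \<longlongrightarrow> 3 * (-1) - (-1)) at_bot" using tl unfolding feq .
  hence "3 * a 0 - b 0 = -2" by (simp add: tendsto_const_iff)
  hence hb: "b x = 3 * a x + 2" for x using Dc[of x] by simp
  define \<alpha> where "\<alpha> x = a x + 1" for x
  have dal: "(\<alpha> has_real_derivative a1 x) (at x)" for x unfolding \<alpha>_def by (auto intro!: derivative_eq_intros da)
  have cal: "continuous_on UNIV \<alpha>" unfolding \<alpha>_def by (intro continuous_intros ca)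
  have ode: "a1 x = - v * \<alpha> x - (\<alpha> x)^2 / 2" for x
  proof -
    have "a1 x + 3 * a1 x = - v * (a x + (3 * a x + 2) + 2) - ((3 * a x + 2) - a x)^2 / 2"
      using first_int[of x] hb[of x] b1a[of x] by simp
    thus ?thesis unfolding \<alpha>_def by (simp add: power2_eq_square field_simps)
  qed
  obtain M where M: "\<And>x. \<bar>a x\<bar> \<le> M" using bnd by blast
  have alb: "\<bar>\<alpha> x\<bar> \<le> M + 1" for x using M[of x] by (simp add: \<alpha>_def)
  show ?thesis
  proof (cases "\<exists>z. \<alpha> z = 0")
    case True
    then obtain z where z: "\<alpha> z = 0" by blast
    define f where "f x = (\<alpha> x)^2" for x
    have df: "(f has_real_derivative 2 * \<alpha> x * a1 x) (at x)" for x
      unfolding f_def by (auto intro!: derivative_eq_intros dal)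
    have fb: "\<bar>2 * \<alpha> x * a1 x\<bar> \<le> (2 * \<bar>v\<bar> + (M + 1)) * f x" for x
    proof -
      have "2 * \<alpha> x * a1 x = (\<alpha> x)^2 * (- 2 * v - \<alpha> x)" unfolding ode[of x] by (simp add: power2_eq_square algebra_simps)
      hence "\<bar>2 * \<alpha> x * a1 x\<bar> = (\<alpha> x)^2 * \<bar>- 2 * v - \<alpha> x\<bar>" by (simp add: abs_mult)
      also have "\<dots> \<le> (\<alpha> x)^2 * (2 * \<bar>v\<bar> + (M + 1))"
        using alb[of x] by (intro mult_left_mono) auto
      finally show ?thesis by (simp add: f_def mult.commute)
    qed
    have "f x = 0" for x
      apply (rule gronwall_zero_UNIV[where f=f and f'="\<lambda>x. 2 * \<alpha> x * a1 x" and K="2 * \<bar>v\<bar> + (M + 1)" and ?x0.0=z])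
      apply (rule df) apply (rule fb) apply (simp add: f_def) apply (simp add: f_def z) done
    hence a0: "\<alpha> x = 0" for x by (simp add: f_def)
    have a1': "a x = -1" for x using a0[of x] unfolding \<alpha>_def by linarith
    have "a x = -1 \<and> b x = -1" for x using hb[of x] a1'[of x] by linarith
    thus ?thesis by blast
  next
    case False
    hence nz: "\<alpha> x \<noteq> 0" for x by blast
    have sgn: "(\<forall>x. \<alpha> x > 0) \<or> (\<forall>x. \<alpha> x < 0)"
    proof (rule ccontr)
      assume "\<not> ?thesis"
      then obtain p q where "\<not> \<alpha> p > 0" "\<not> \<alpha> q < 0" by blast
      hence "\<alpha> p < 0" "\<alpha> q > 0" using nz[of p] nz[of q] by auto
      from ivt_zero[OF cal this(2) this(1)] nz show False by blast
    qed
    show ?thesis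
    proof (cases "\<forall>x. \<alpha> x < 0")
      case True
      have neg: "a1 x < 0" for x
      proof -
        have "a1 x = \<alpha> x * (- v - \<alpha> x / 2)" unfolding ode[of x] by (simp add: power2_eq_square algebra_simps)
        moreover have "- v - \<alpha> x / 2 > 0" using v True[rule_format, of x] by linarith
        ultimately show ?thesis using True by (simp add: mult_neg_pos)
      qed
      have amono: "a y \<le> a 0" if "y \<ge> 0" for y
      proof (cases "y = 0")
        case False
        hence "0 < y" using that by simp
        from MVT2[OF this, of a a1] da obtain z where "a y - a 0 = (y - 0) * a1 z" by blast
        moreover have "(y - 0) * a1 z \<le> 0" using neg[of z] \<open>0 < y\<close> by (intro mult_nonneg_nonpos) auto
        ultimately show ?thesis by linarith
      qed simp
      have Aa: "A \<le> a 0" by (rule tendsto_upperbound[OF ta]) (auto simp: eventually_at_top_linorder intro!: exI[of _ 0] amono)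
      have fa: "a1 = (\<lambda>x. - v * (a x + 1) - (a x + 1)^2 / 2)" using ode by (simp add: fun_eq_iff \<alpha>_def)
      have "(a1 \<longlongrightarrow> - v * (A + 1) - (A + 1)^2 / 2) at_top" unfolding fa by (auto intro!: tendsto_intros ta)
      from deriv_lim_top[OF da ta this] have k: "- v * (A + 1) - (A + 1)^2 / 2 = 0" .
      have "A + 1 < 0" using Aa True[rule_format, of 0] by (simp add: \<alpha>_def)
      moreover have "- v * (A + 1) - (A + 1)^2 / 2 = (A + 1) * (- v - (A + 1) / 2)" by (simp add: power2_eq_square algebra_simps)
      moreover have "- v - (A + 1) / 2 > 0" using v \<open>A + 1 < 0\<close> by (simp add: field_simps)
      ultimately have "- v * (A + 1) - (A + 1)^2 / 2 < 0" by (simp add: mult_neg_pos)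
      thus ?thesis using k by simp
    next
      case False
      hence pos: "\<alpha> x > 0" for x using sgn by blast
      show ?thesis
      proof (cases "v = 0")
        case True
        have neg: "a1 x < 0" for x using ode[of x] pos[of x] True by simp
        have amono: "a (-1) \<le> a y" if "y \<le> -1" for y
        proof (cases "y = -1")
          case False
          hence "y < -1" using that by simp
          from MVT2[OF this, of a a1] da obtain z where "a (-1) - a y = (-1 - y) * a1 z" by blast
          moreover have "(-1 - y) * a1 z \<le> 0" using neg[of z] \<open>y < -1\<close> by (intro mult_nonneg_nonpos) auto
          ultimately show ?thesis by linarith
        qed simp
        have "a (-1) \<le> -1" by (rule tendsto_lowerbound[OF la]) (auto simp: eventually_at_bot_linorder intro!: exI[of _ "-1"] amono)
        thus ?thesis using pos[of "-1"] by (simp add: \<alpha>_def)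
      next
        case False
        hence vn: "v < 0" using v by simp
        define mu where "mu = - v"
        have mu: "mu > 0" using vn by (simp add: mu_def)
        define z where "z x = (1 / \<alpha> x - 1 / (2 * mu)) * exp (mu * x)" for x
        have dz: "(z has_real_derivative 0) (at x)" for x
          unfolding z_def using nz[of x] mu
          by (auto intro!: derivative_eq_intros dal simp: ode[of x] mu_def power2_eq_square field_simps)
        hence zc: "z x = z 0" for x using DERIV_isconst_all by blast
        define C0 where "C0 = z 0"
        have inv: "1 / \<alpha> x = 1 / (2 * mu) + C0 * exp (- mu * x)" for x
        proof -
          have "(1 / \<alpha> x - 1 / (2 * mu)) * exp (mu * x) = C0" using zc[of x] by (simp add: z_def C0_def)
          hence "1 / \<alpha> x - 1 / (2 * mu) = C0 * exp (- mu * x)"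
            by (simp add: field_simps exp_minus)
          thus ?thesis by simp
        qed
        have C0: "C0 > 0"
        proof (rule ccontr)
          assume "\<not> C0 > 0"
          hence le: "1 / \<alpha> x \<le> 1 / (2 * mu)" for x using inv[of x] by (simp add: mult_nonpos_nonneg)
          have ge: "\<alpha> x \<ge> 2 * mu" for x using le[of x] pos[of x] mu by (simp add: field_simps)
          have ge2: "2 * mu - 1 \<le> a x" for x using ge[of x] by (simp add: \<alpha>_def)
          have "2 * mu - 1 \<le> -1" by (rule tendsto_lowerbound[OF la]) (use ge2 in auto)
          thus False using mu by simp
        qed
        define C where "C = 2 * mu * C0"
        have Cp: "C > 0" using C0 mu by (simp add: C_def)
        have alf: "\<alpha> x = 2 * mu / (1 + C * exp (v * x))" for x
        proof -
          have "1 / \<alpha> x = (1 + C * exp (v * x)) / (2 * mu)"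
            using inv[of x] mu by (simp add: C_def mu_def field_simps)
          moreover have "1 + C * exp (v * x) > 0" using Cp by (simp add: add_pos_pos)
          ultimately show ?thesis using nz[of x] mu by (simp add: field_simps)
        qed
        have "a x = -1 + 2 * (- v) / (1 + C * exp (v * x)) \<and> b x = -1 + 6 * (- v) / (1 + C * exp (v * x))" for x
          using alf[of x] hb[of x] by (simp add: \<alpha>_def mu_def field_simps)
        thus ?thesis using vn Cp by blast
      qed
    qed
  qed
qed

lemma vpos_const:
  assumes v: "v > 0"
  shows "\<forall>x. a x = -1 \<and> b x = -1"
proof -
  obtain M where M: "\<And>x. \<bar>b x - a x\<bar> \<le> 2 * M" using wbnd by blast
  have M0: "M \<ge> 0" using M[of 0] by linarith
  define N where "N x = (a1 x)^2 + (b1 x)^2" for x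
  have Nnn: "N x \<ge> 0" for x by (simp add: N_def)
  define N' where "N' x = 2 * a1 x * a2 x + 2 * b1 x * b2 x" for x
  have dN: "(N has_real_derivative N' x) (at x)" for x
    unfolding N_def N'_def by (auto intro!: derivative_eq_intros da1 db1)
  have l0: "((\<lambda>x. b x - a x) \<longlongrightarrow> 0) at_bot" using tendsto_diff[OF lb la] by simp
  have "eventually (\<lambda>x. dist (b x - a x) 0 < v / 4) at_bot" using tendstoD[OF l0, of "v / 4"] v by simp
  hence "eventually (\<lambda>x. \<bar>b x - a x\<bar> < v / 4) at_bot" by (simp add: dist_real_def)
  then obtain X where X: "\<And>x. x \<le> X \<Longrightarrow> \<bar>b x - a x\<bar> < v / 4" by (auto simp: eventually_at_bot_linorder)
  have Nd: "N' x \<le> - v * N x" if "x \<le> X" for x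
  proof -
    have w: "\<bar>b x - a x\<bar> \<le> 2 * (v / 8)" using X[OF that] by simp
    have w': "\<bar>a x - b x\<bar> \<le> 2 * (v / 8)" using X[OF that] by (simp add: abs_minus_commute)
    have e1: "a2 x + v * a1 x = ((b x - a x) / 2 - 0) * a1 x - (if b1 x - a1 x \<le> 0 then 0 else (b x - a x) * (b1 x - a1 x) / 2)"
      unfolding ea[of x] by (simp add: algebra_simps)
    have e2: "b2 x + v * b1 x = ((a x - b x) / 2 - 0) * b1 x - (if a1 x - b1 x \<le> 0 then 0 else (a x - b x) * (a1 x - b1 x) / 2)"
      using b2_alt[OF eb[of x]] by (simp add: algebra_simps)
    have ba: "\<bar>a2 x + v * a1 x\<bar> \<le> (v / 4) * (\<bar>a1 x\<bar> + \<bar>b1 x\<bar>)"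
      unfolding e1 using alg_bound[OF w, where v=0 and p="a1 x" and q="b1 x" and c="b1 x - a1 x \<le> 0"] by simp
    have bb: "\<bar>b2 x + v * b1 x\<bar> \<le> (v / 4) * (\<bar>a1 x\<bar> + \<bar>b1 x\<bar>)"
      unfolding e2 using alg_bound[OF w', where v=0 and p="b1 x" and q="a1 x" and c="a1 x - b1 x \<le> 0"] by (simp add: add.commute)
    from sq_bound[OF ba bb] v have
      sb: "\<bar>2 * a1 x * (a2 x + v * a1 x) + 2 * b1 x * (b2 x + v * b1 x)\<bar> \<le> 4 * (v / 4) * ((a1 x)^2 + (b1 x)^2)" by simp
    have "N' x = (2 * a1 x * (a2 x + v * a1 x) + 2 * b1 x * (b2 x + v * b1 x)) - 2 * v * N x"
      by (simp add: N'_def N_def power2_eq_square algebra_simps)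
    moreover have "4 * (v / 4) * ((a1 x)^2 + (b1 x)^2) = v * N x" by (simp add: N_def)
    ultimately show ?thesis using sb by linarith
  qed
  show ?thesis
  proof (cases "N X = 0")
    case True
    hence "a1 X = 0 \<and> b1 X = 0" unfolding N_def by (rule sum_power2_eq_zero_iff[THEN iffD1])
    from Zlem[OF conjunct1[OF this] conjunct2[OF this]] have z: "a1 x = 0 \<and> b1 x = 0" for x by blast
    have "(a has_real_derivative 0) (at t)" for t using da[of t] z[of t] by simp
    hence ca': "a x = a 0" for x by (rule DERIV_isconst_all[rule_format]) 
    have "(b has_real_derivative 0) (at t)" for t using db[of t] z[of t] by simp
    hence cb': "b x = b 0" for x by (rule DERIV_isconst_all[rule_format])
    obtain c1 c2 where cc: "c1 = a 0" "c2 = b 0" by blast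
    have fa: "a = (\<lambda>x::real. c1)" "b = (\<lambda>x::real. c2)" using ca' cb' cc by (auto intro!: ext)
    have a0: "a 0 = -1" using la unfolding fa(1) by (simp add: tendsto_const_iff)
    have b0: "b 0 = -1" using lb unfolding fa(2) by (simp add: tendsto_const_iff)
    show ?thesis
    proof
      fix x show "a x = -1 \<and> b x = -1" using ca'[of x] cb'[of x] a0 b0 by simp
    qed
  next
    case False
    hence NX: "N X > 0" using Nnn[of X] by simp
    have Nmono: "N z \<ge> N X" if "z \<le> X" for z
    proof (cases "z = X")
      case False
      hence "z < X" using that by simp
      from MVT2[OF this, of N N'] dN obtain c where c: "z < c" "c < X" "N X - N z = (X - z) * N' c" by blast
      have "v * N c \<ge> 0" using Nnn[of c] v by simp
      hence "N' c \<le> 0" using Nd[of c] c by linarith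
      hence "(X - z) * N' c \<le> 0" using \<open>z < X\<close> by (intro mult_nonneg_nonpos) auto
      thus ?thesis using c(3) by linarith
    qed simp
    have Ngrow: "N x \<ge> N X + v * N X * (X - x)" if "x \<le> X" for x
    proof (cases "x = X")
      case False
      hence "x < X" using that by simp
      from MVT2[OF this, of N N'] dN obtain c where c: "x < c" "c < X" "N X - N x = (X - x) * N' c" by blast
      have "v * N c \<ge> v * N X" using Nmono[of c] c v by (intro mult_left_mono) auto
      hence "N' c \<le> - v * N X" using Nd[of c] c by linarith
      hence "(X - x) * N' c \<le> (X - x) * (- v * N X)" using \<open>x < X\<close> by (intro mult_left_mono) auto
      thus ?thesis using c(3) by (simp add: algebra_simps)
    qed simp
    have fe: "(\<lambda>x. a1 x + b1 x) = (\<lambda>x. - v * (a x + b x + 2) - (b x - a x)^2 / 2)"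
      using first_int by (simp add: fun_eq_iff)
    have "((\<lambda>x. a1 x + b1 x) \<longlongrightarrow> - v * (-1 + -1 + 2) - (-1 - -1)^2 / 2) at_bot"
      unfolding fe by (intro tendsto_intros la lb) simp
    hence "((\<lambda>x. a1 x + b1 x) \<longlongrightarrow> 0) at_bot" by simp
    from tendstoD[OF this, of 1] have "eventually (\<lambda>x. dist (a1 x + b1 x) 0 < 1) at_bot" by simp
    hence "eventually (\<lambda>x. \<bar>a1 x + b1 x\<bar> < 1) at_bot" by (simp add: dist_real_def)
    then obtain X2 where X2: "\<And>x. x \<le> X2 \<Longrightarrow> \<bar>a1 x + b1 x\<bar> < 1" by (auto simp: eventually_at_bot_linorder)
    define T where "T = 1 / (v * N X)"
    have vN: "v * N X > 0" using v NX by simp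
    define X3 where "X3 = min X X2 - T"
    have big: "\<bar>b1 x - a1 x\<bar> \<ge> 1" if "x \<le> X3" for x
    proof -
      have Tp: "T > 0" using vN by (simp add: T_def)
      have xX: "x \<le> X" "X - x \<ge> T" "x \<le> X2" using that Tp unfolding X3_def by auto
      have "v * N X * (X - x) \<ge> v * N X * T" using xX(2) vN by (intro mult_left_mono) auto
      also have "v * N X * T = 1" using v NX unfolding T_def by simp
      finally have "N x \<ge> 1" using Ngrow[OF xX(1)] NX by linarith
      moreover have "(b1 x - a1 x)^2 + (a1 x + b1 x)^2 = 2 * N x" by (simp add: N_def power2_eq_square algebra_simps)
      moreover have "(a1 x + b1 x)^2 \<le> 1" using X2[OF xX(3)] by (simp add: abs_square_le_1)
      ultimately have "(b1 x - a1 x)^2 \<ge> 1" by linarith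
      thus ?thesis by (metis abs_square_less_1 not_less)
    qed
    define x where "x = X3 - (4 * M + 1)"
    have "x < X3" using M0 by (simp add: x_def)
    have dw: "((\<lambda>x. b x - a x) has_real_derivative b1 t - a1 t) (at t)" for t
      by (auto intro!: derivative_eq_intros da db)
    from MVT2[OF \<open>x < X3\<close>, of "\<lambda>x. b x - a x" "\<lambda>x. b1 x - a1 x"] dw obtain c where
      c: "x < c" "c < X3" "(b X3 - a X3) - (b x - a x) = (X3 - x) * (b1 c - a1 c)"
      by blast
    have "X3 - x = 4 * M + 1" by (simp add: x_def)
    hence "\<bar>(X3 - x) * (b1 c - a1 c)\<bar> = (4 * M + 1) * \<bar>b1 c - a1 c\<bar>" using M0 by (simp add: abs_mult)
    moreover have "(4 * M + 1) * \<bar>b1 c - a1 c\<bar> \<ge> (4 * M + 1) * 1" using big[of c] c M0 by (intro mult_left_mono) auto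
    ultimately have "\<bar>(X3 - x) * (b1 c - a1 c)\<bar> \<ge> (4 * M + 1) * 1" by linarith
    moreover have "\<bar>(b X3 - a X3) - (b x - a x)\<bar> \<le> 4 * M" using M[of X3] M[of x] by linarith
    ultimately show ?thesis using c(3) by simp
  qed
qed

end

definition Gw :: "real \<Rightarrow> real \<Rightarrow> real \<times> real" where
  "Gw v x = (-1 - 2 * v / (1 + exp (v * x)), -1 - 6 * v / (1 + exp (v * x)))"

definition Hw :: "real \<Rightarrow> real \<Rightarrow> real \<times> real" where
  "Hw v x = (snd (Gw v x), fst (Gw v x))"

lemma phi_alg: "(E::real) > 0 \<Longrightarrow> - (E * v) / (1 + E)^2 = - v * (1 / (1 + E) - (1 / (1 + E))^2)"
proof -
  assume E: "E > 0"
  hence ne: "1 + E \<noteq> 0" by simp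
  have "1 / (1 + E) - (1 / (1 + E))^2 = E / (1 + E)^2"
    using ne by (simp add: power2_eq_square divide_simps)
  thus ?thesis by simp
qed

lemma Gw_ode:
  fixes v :: real
  defines "phi \<equiv> (\<lambda>x. 1 / (1 + exp (v * x)))"
  shows "ode2 v (\<lambda>x. -1 - 2 * v * phi x) (\<lambda>x. 2 * v^2 * (phi x - (phi x)^2)) (\<lambda>x. -2 * v^3 * (phi x - (phi x)^2) * (1 - 2 * phi x))
               (\<lambda>x. -1 - 6 * v * phi x) (\<lambda>x. 6 * v^2 * (phi x - (phi x)^2)) (\<lambda>x. -6 * v^3 * (phi x - (phi x)^2) * (1 - 2 * phi x))"
proof -
  have pos: "1 + exp (v * x) > 0" for x by (simp add: add_pos_pos)
  have dphi: "(phi has_real_derivative - v * (phi x - (phi x)^2)) (at x)" for x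
  proof -
    have "(phi has_real_derivative - (exp (v * x) * v) / (1 + exp (v * x))^2) (at x)"
      unfolding phi_def using pos[of x]
      by (auto intro!: derivative_eq_intros simp: power2_eq_square field_simps)
    moreover have "- (exp (v * x) * v) / (1 + exp (v * x))^2 = - v * (phi x - (phi x)^2)"
      unfolding phi_def by (rule phi_alg) simp
    ultimately show ?thesis by simp
  qed
  have p01: "0 < phi x" "phi x < 1" for x
    unfolding phi_def using pos[of x] by (auto simp: field_simps)
  have pp: "phi x - (phi x)^2 > 0" for x using p01[of x] by (simp add: power2_eq_square algebra_simps mult_less_cancel_left1) 
  show ?thesis unfolding ode2_def
  proof (intro allI conjI)
    fix x
    show "((\<lambda>x. -1 - 2 * v * phi x) has_real_derivative 2 * v^2 * (phi x - (phi x)^2)) (at x)"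
      by (auto intro!: derivative_eq_intros dphi simp: power2_eq_square algebra_simps)
    show "((\<lambda>x. -1 - 6 * v * phi x) has_real_derivative 6 * v^2 * (phi x - (phi x)^2)) (at x)"
      by (auto intro!: derivative_eq_intros dphi simp: power2_eq_square algebra_simps)
    show "((\<lambda>x. 2 * v^2 * (phi x - (phi x)^2)) has_real_derivative -2 * v^3 * (phi x - (phi x)^2) * (1 - 2 * phi x)) (at x)"
      by (auto intro!: derivative_eq_intros dphi simp: power2_eq_square power3_eq_cube algebra_simps)
    show "((\<lambda>x. 6 * v^2 * (phi x - (phi x)^2)) has_real_derivative -6 * v^3 * (phi x - (phi x)^2) * (1 - 2 * phi x)) (at x)"
      by (auto intro!: derivative_eq_intros dphi simp: power2_eq_square power3_eq_cube algebra_simps)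
    have d: "6 * v^2 * (phi x - (phi x)^2) - 2 * v^2 * (phi x - (phi x)^2) = 4 * v^2 * (phi x - (phi x)^2)" by simp
    show "-2 * v^3 * (phi x - (phi x)^2) * (1 - 2 * phi x) =
      (((-1 - 6 * v * phi x) - (-1 - 2 * v * phi x)) / 2 - v) * (2 * v^2 * (phi x - (phi x)^2)) -
      (if 6 * v^2 * (phi x - (phi x)^2) - 2 * v^2 * (phi x - (phi x)^2) \<le> 0 then 0
       else ((-1 - 6 * v * phi x) - (-1 - 2 * v * phi x)) * (6 * v^2 * (phi x - (phi x)^2) - 2 * v^2 * (phi x - (phi x)^2)) / 2)"
    proof (cases "v = 0")
      case True thus ?thesis by simp
    next
      case False
      have "4 * v^2 * (phi x - (phi x)^2) > 0" using False pp[of x] by (intro mult_pos_pos) auto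
      hence "\<not> 6 * v^2 * (phi x - (phi x)^2) - 2 * v^2 * (phi x - (phi x)^2) \<le> 0" unfolding d by linarith
      thus ?thesis by (simp add: power2_eq_square power3_eq_cube field_simps)
    qed
    show "-6 * v^3 * (phi x - (phi x)^2) * (1 - 2 * phi x) =
      - (((-1 - 6 * v * phi x) - (-1 - 2 * v * phi x)) / 2 + v) * (6 * v^2 * (phi x - (phi x)^2)) -
      (if 6 * v^2 * (phi x - (phi x)^2) - 2 * v^2 * (phi x - (phi x)^2) \<le> 0
       then ((-1 - 6 * v * phi x) - (-1 - 2 * v * phi x)) * (6 * v^2 * (phi x - (phi x)^2) - 2 * v^2 * (phi x - (phi x)^2)) / 2 else 0)"
    proof (cases "v = 0")
      case True thus ?thesis by simp
    next
      case False
      have "4 * v^2 * (phi x - (phi x)^2) > 0" using False pp[of x] by (intro mult_pos_pos) auto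
      hence "\<not> 6 * v^2 * (phi x - (phi x)^2) - 2 * v^2 * (phi x - (phi x)^2) \<le> 0" unfolding d by linarith
      thus ?thesis by (simp add: power2_eq_square power3_eq_cube field_simps)
    qed
  qed
qed

lemma tw_intro:
  assumes ode: "ode2 v (\<lambda>x. fst (g x)) a1 a2 (\<lambda>x. snd (g x)) b1 b2"
    and l1: "(g \<longlongrightarrow> L) at_bot" and l2: "(g \<longlongrightarrow> R) at_top"
  shows "traveling_wave v g"
proof -
  have da: "\<And>x. ((\<lambda>x. fst (g x)) has_real_derivative a1 x) (at x)"
    and db: "\<And>x. ((\<lambda>x. snd (g x)) has_real_derivative b1 x) (at x)"
    using ode unfolding ode2_def by blast+
  have "continuous_on UNIV (\<lambda>x. (fst (g x), snd (g x)))"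
    using da db by (intro continuous_on_Pair continuous_at_imp_continuous_on ballI DERIV_isCont) auto
  hence "continuous_on UNIV g" by simp
  moreover have "tfe_solution (\<lambda>t y. fst (g (y - v * t))) (\<lambda>t y. snd (g (y - v * t)))"
    using ode_to_tfe[OF ode] by simp
  ultimately show ?thesis using l1 l2 unfolding traveling_wave_def by blast
qed

lemma nonconst_intro:
  assumes l1: "(g \<longlongrightarrow> L) at_bot" and l2: "(g \<longlongrightarrow> R) at_top" and ne: "L \<noteq> R"
  shows "nonconstant g"
proof (rule ccontr)
  assume "\<not> nonconstant g"
  hence "g x = g 0" for x by (auto simp: nonconstant_def)
  hence "g = (\<lambda>x. g 0)" by (auto simp: fun_eq_iff)
  hence "((\<lambda>x::real. g 0) \<longlongrightarrow> L) at_bot" "((\<lambda>x::real. g 0) \<longlongrightarrow> R) at_top" using l1 l2 by auto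
  hence "g 0 = L" "g 0 = R" by (auto simp: tendsto_const_iff)
  thus False using ne by simp
qed

lemma Gw_props:
  assumes v: "v < 0"
  shows "traveling_wave v (Gw v) \<and> nonconstant (Gw v) \<and> (Gw v \<longlongrightarrow> (-1, -1)) at_bot \<and>
         (Gw v \<longlongrightarrow> (-2 * v - 1, -6 * v - 1)) at_top \<and>
         traveling_wave v (Hw v) \<and> nonconstant (Hw v) \<and> (Hw v \<longlongrightarrow> (-1, -1)) at_bot \<and>
         (Hw v \<longlongrightarrow> (-6 * v - 1, -2 * v - 1)) at_top"
proof -
  define phi where "phi = (\<lambda>x::real. 1 / (1 + exp (v * x)))"
  have p0: "(phi \<longlongrightarrow> 0) at_bot" unfolding phi_def using v by real_asymp
  have p1: "(phi \<longlongrightarrow> 1) at_top" unfolding phi_def using v by real_asymp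
  have fG: "(\<lambda>x. fst (Gw v x)) = (\<lambda>x. -1 - 2 * v * phi x)" "(\<lambda>x. snd (Gw v x)) = (\<lambda>x. -1 - 6 * v * phi x)"
    by (auto simp: Gw_def phi_def fun_eq_iff)
  have Gx: "Gw v = (\<lambda>x. (-1 - 2 * v * phi x, -1 - 6 * v * phi x))"
    by (auto simp: Gw_def phi_def fun_eq_iff)
  have Hx: "Hw v = (\<lambda>x. (-1 - 6 * v * phi x, -1 - 2 * v * phi x))"
    by (auto simp: Hw_def Gw_def phi_def fun_eq_iff)
  have "\<exists>a1 a2 b1 b2. ode2 v (\<lambda>x. fst (Gw v x)) a1 a2 (\<lambda>x. snd (Gw v x)) b1 b2"
    unfolding fG phi_def using Gw_ode by blast
  then obtain a1 a2 b1 b2 where odeG: "ode2 v (\<lambda>x. fst (Gw v x)) a1 a2 (\<lambda>x. snd (Gw v x)) b1 b2" by blast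
  have odeH: "ode2 v (\<lambda>x. fst (Hw v x)) b1 b2 (\<lambda>x. snd (Hw v x)) a1 a2"
    using ode2_swap[OF odeG] by (simp add: Hw_def)
  have lGb: "(Gw v \<longlongrightarrow> (-1, -1)) at_bot"
    unfolding Gx using tendsto_Pair[OF tendsto_diff[OF tendsto_const tendsto_mult[OF tendsto_const p0]]
       tendsto_diff[OF tendsto_const tendsto_mult[OF tendsto_const p0]], of "-1" "2 * v" "-1" "6 * v"] by simp
  have e1: "((-2 * v - 1, -6 * v - 1)::real\<times>real) = (-1 - 2 * v * 1, -1 - 6 * v * 1)" by (simp add: algebra_simps)
  have e2: "((-6 * v - 1, -2 * v - 1)::real\<times>real) = (-1 - 6 * v * 1, -1 - 2 * v * 1)" by (simp add: algebra_simps)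
  have lGt: "(Gw v \<longlongrightarrow> (-2 * v - 1, -6 * v - 1)) at_top"
    unfolding Gx e1 using tendsto_Pair[OF tendsto_diff[OF tendsto_const tendsto_mult[OF tendsto_const p1]]
       tendsto_diff[OF tendsto_const tendsto_mult[OF tendsto_const p1]], of "-1" "2 * v" "-1" "6 * v"] by simp
  have lHb: "(Hw v \<longlongrightarrow> (-1, -1)) at_bot"
    unfolding Hx using tendsto_Pair[OF tendsto_diff[OF tendsto_const tendsto_mult[OF tendsto_const p0]]
       tendsto_diff[OF tendsto_const tendsto_mult[OF tendsto_const p0]], of "-1" "6 * v" "-1" "2 * v"] by simp
  have lHt: "(Hw v \<longlongrightarrow> (-6 * v - 1, -2 * v - 1)) at_top"
    unfolding Hx e2 using tendsto_Pair[OF tendsto_diff[OF tendsto_const tendsto_mult[OF tendsto_const p1]]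
       tendsto_diff[OF tendsto_const tendsto_mult[OF tendsto_const p1]], of "-1" "6 * v" "-1" "2 * v"] by simp
  have ne1: "((-1, -1) :: real \<times> real) \<noteq> (-2 * v - 1, -6 * v - 1)" using v by simp
  have ne2: "((-1, -1) :: real \<times> real) \<noteq> (-6 * v - 1, -2 * v - 1)" using v by simp
  show ?thesis
    using tw_intro[OF odeG lGb lGt] tw_intro[OF odeH lHb lHt]
      nonconst_intro[OF lGb lGt ne1] nonconst_intro[OF lHb lHt ne2] lGb lGt lHb lHt by blast
qed

lemma tw_setup:
  assumes tw: "traveling_wave v g" and lim: "(g \<longlongrightarrow> (-1, -1)) at_bot"
  shows "\<exists>R. tws v (\<lambda>x. fst (g x)) (deriv (\<lambda>x. fst (g x))) (deriv (deriv (\<lambda>x. fst (g x))))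
      (\<lambda>x. snd (g x)) (deriv (\<lambda>x. snd (g x))) (deriv (deriv (\<lambda>x. snd (g x)))) (fst R) (snd R)"
proof -
  from tw obtain R where R: "(g \<longlongrightarrow> R) at_top" unfolding traveling_wave_def by blast
  have "tws v (\<lambda>x. fst (g x)) (deriv (\<lambda>x. fst (g x))) (deriv (deriv (\<lambda>x. fst (g x))))
      (\<lambda>x. snd (g x)) (deriv (\<lambda>x. snd (g x))) (deriv (deriv (\<lambda>x. snd (g x)))) (fst R) (snd R)"
  proof
    show "ode2 v (\<lambda>x. fst (g x)) (deriv (\<lambda>x. fst (g x))) (deriv (deriv (\<lambda>x. fst (g x))))
      (\<lambda>x. snd (g x)) (deriv (\<lambda>x. snd (g x))) (deriv (deriv (\<lambda>x. snd (g x))))"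
      by (rule tw_to_ode[OF tw])
    show "((\<lambda>x. fst (g x)) \<longlongrightarrow> -1) at_bot" using tendsto_fst[OF lim] by simp
    show "((\<lambda>x. snd (g x)) \<longlongrightarrow> -1) at_bot" using tendsto_snd[OF lim] by simp
    show "((\<lambda>x. fst (g x)) \<longlongrightarrow> fst R) at_top" using tendsto_fst[OF R] by simp
    show "((\<lambda>x. snd (g x)) \<longlongrightarrow> snd R) at_top" using tendsto_snd[OF R] by simp
  qed
  thus ?thesis by blast
qed

lemma shift_eq:
  fixes v C x k :: real
  assumes v: "v < 0" and C: "C > 0"
  shows "-1 + k * (- v) / (1 + C * exp (v * x)) = -1 - k * v / (1 + exp (v * (x + ln C / v)))"
proof -
  have vne: "v \<noteq> 0" using v by simp
  have "v * (ln C / v) = ln C" using vne by simp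
  hence "v * (x + ln C / v) = v * x + ln C" by (simp add: distrib_left)
  hence "exp (v * (x + ln C / v)) = exp (v * x) * C" using C by (simp add: exp_add)
  thus ?thesis by (simp add: mult.commute)
qed

lemma partA_unique:
  assumes v: "v < 0" and tw: "traveling_wave v K" and nc: "nonconstant K" and lim: "(K \<longlongrightarrow> (-1, -1)) at_bot"
  shows "\<exists>s. K = (\<lambda>x. Gw v (x + s)) \<or> K = (\<lambda>x. Hw v (x + s))"
proof -
  from tw_setup[OF tw lim] obtain R where
    T: "tws v (\<lambda>x. fst (K x)) (deriv (\<lambda>x. fst (K x))) (deriv (deriv (\<lambda>x. fst (K x))))
      (\<lambda>x. snd (K x)) (deriv (\<lambda>x. snd (K x))) (deriv (deriv (\<lambda>x. snd (K x)))) (fst R) (snd R)" by blast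
  have notc: "\<not> (\<forall>x. fst (K x) = -1 \<and> snd (K x) = -1)"
  proof
    assume "\<forall>x. fst (K x) = -1 \<and> snd (K x) = -1"
    hence "K x = K y" for x y by (simp add: prod_eq_iff)
    thus False using nc by (auto simp: nonconstant_def)
  qed
  from tws.classify[OF T] v
  consider "\<forall>x. 3 * deriv (\<lambda>x. fst (K x)) x - deriv (\<lambda>x. snd (K x)) x = 0"
    | "\<forall>x. 3 * deriv (\<lambda>x. snd (K x)) x - deriv (\<lambda>x. fst (K x)) x = 0" by force
  thus ?thesis
  proof cases
    case 1
    from tws.logistic[OF T _ 1] v notc obtain C where C: "C > 0"
      "\<And>x. fst (K x) = -1 + 2 * (- v) / (1 + C * exp (v * x)) \<and> snd (K x) = -1 + 6 * (- v) / (1 + C * exp (v * x))"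
      by force
    have "K = (\<lambda>x. Gw v (x + ln C / v))"
    proof
      fix x show "K x = Gw v (x + ln C / v)"
        using C(2)[of x] shift_eq[OF v C(1), of 2 x] shift_eq[OF v C(1), of 6 x] by (simp add: prod_eq_iff Gw_def)
    qed
    thus ?thesis by blast
  next
    case 2
    have S: "tws v (\<lambda>x. snd (K x)) (deriv (\<lambda>x. snd (K x))) (deriv (deriv (\<lambda>x. snd (K x))))
      (\<lambda>x. fst (K x)) (deriv (\<lambda>x. fst (K x))) (deriv (deriv (\<lambda>x. fst (K x)))) (snd R) (fst R)"
      by (rule tws.swap[OF T])
    have notc': "\<not> (\<forall>x. snd (K x) = -1 \<and> fst (K x) = -1)" using notc by blast
    from tws.logistic[OF S _ 2] v notc' obtain C where C: "C > 0"
      "\<And>x. snd (K x) = -1 + 2 * (- v) / (1 + C * exp (v * x)) \<and> fst (K x) = -1 + 6 * (- v) / (1 + C * exp (v * x))"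
      by force
    have "K = (\<lambda>x. Hw v (x + ln C / v))"
    proof
      fix x show "K x = Hw v (x + ln C / v)"
        using C(2)[of x] shift_eq[OF v C(1), of 2 x] shift_eq[OF v C(1), of 6 x] by (simp add: prod_eq_iff Gw_def Hw_def)
    qed
    thus ?thesis by blast
  qed
qed

lemma partA_zero:
  assumes tw: "traveling_wave 0 g" and lim: "(g \<longlongrightarrow> (-1, -1)) at_bot"
  shows "\<forall>y. g y = (-1, -1)"
proof -
  from tw_setup[OF tw lim] obtain R where
    T: "tws 0 (\<lambda>x. fst (g x)) (deriv (\<lambda>x. fst (g x))) (deriv (deriv (\<lambda>x. fst (g x))))
      (\<lambda>x. snd (g x)) (deriv (\<lambda>x. snd (g x))) (deriv (deriv (\<lambda>x. snd (g x)))) (fst R) (snd R)" by blast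
  from tws.classify[OF T]
  consider "\<forall>x. 3 * deriv (\<lambda>x. fst (g x)) x - deriv (\<lambda>x. snd (g x)) x = 0"
    | "\<forall>x. 3 * deriv (\<lambda>x. snd (g x)) x - deriv (\<lambda>x. fst (g x)) x = 0" by force
  hence "\<forall>x. fst (g x) = -1 \<and> snd (g x) = -1"
  proof cases
    case 1 from tws.logistic[OF T _ 1] show ?thesis by simp
  next
    case 2 from tws.logistic[OF tws.swap[OF T] _ 2] show ?thesis by simp
  qed
  thus ?thesis by (simp add: prod_eq_iff)
qed

lemma partA_pos:
  assumes v: "v > 0" and tw: "traveling_wave v g" and lim: "(g \<longlongrightarrow> (-1, -1)) at_bot"
  shows "\<not> nonconstant g"
proof -
  from tw_setup[OF tw lim] obtain R where
    T: "tws v (\<lambda>x. fst (g x)) (deriv (\<lambda>x. fst (g x))) (deriv (deriv (\<lambda>x. fst (g x))))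
      (\<lambda>x. snd (g x)) (deriv (\<lambda>x. snd (g x))) (deriv (deriv (\<lambda>x. snd (g x)))) (fst R) (snd R)" by blast
  from tws.vpos_const[OF T v] have "g x = (-1, -1)" for x by (simp add: prod_eq_iff)
  thus ?thesis by (simp add: nonconstant_def)
qed

definition Rf :: "(real \<Rightarrow> real \<times> real) \<Rightarrow> real \<Rightarrow> real \<times> real" where
  "Rf g x = (- snd (g (-x)), - fst (g (-x)))"

lemma Rf_Rf: "Rf (Rf g) = g"
  by (auto simp: Rf_def fun_eq_iff)

lemma Rf_shift: "Rf (\<lambda>x. G (x + s)) = (\<lambda>x. Rf G (x + - s))"
  by (auto simp: Rf_def fun_eq_iff)

lemma Rf_nonconst: "nonconstant g \<Longrightarrow> nonconstant (Rf g)"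
proof -
  assume "nonconstant g"
  then obtain x y where "g x \<noteq> g y" by (auto simp: nonconstant_def)
  hence "Rf g (-x) \<noteq> Rf g (-y)" by (auto simp: Rf_def prod_eq_iff)
  thus ?thesis by (auto simp: nonconstant_def)
qed

lemma Rf_lim_bot:
  assumes "(g \<longlongrightarrow> (p, q)) at_top"
  shows "(Rf g \<longlongrightarrow> (- q, - p)) at_bot"
proof -
  have "((\<lambda>x. (- snd (g x), - fst (g x))) \<longlongrightarrow> (- q, - p)) at_top"
    using tendsto_fst[OF assms] tendsto_snd[OF assms] by (auto intro!: tendsto_intros)
  hence "((\<lambda>x. (- snd (g (- (- x))), - fst (g (- (- x))))) \<longlongrightarrow> (- q, - p)) at_top" by simp
  hence "((\<lambda>x. (- snd (g (- x)), - fst (g (- x)))) \<longlongrightarrow> (- q, - p)) (filtermap uminus at_top)"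
    by (simp add: filterlim_filtermap)
  thus ?thesis unfolding Rf_def at_bot_mirror[symmetric] by (simp add: fun_eq_iff)
qed

lemma Rf_lim_top:
  assumes "(g \<longlongrightarrow> (p, q)) at_bot"
  shows "(Rf g \<longlongrightarrow> (- q, - p)) at_top"
proof -
  have "((\<lambda>x. (- snd (g x), - fst (g x))) \<longlongrightarrow> (- q, - p)) at_bot"
    using tendsto_fst[OF assms] tendsto_snd[OF assms] by (auto intro!: tendsto_intros)
  hence "((\<lambda>x. (- snd (g (- (- x))), - fst (g (- (- x))))) \<longlongrightarrow> (- q, - p)) at_bot" by simp
  hence "((\<lambda>x. (- snd (g (- x)), - fst (g (- x)))) \<longlongrightarrow> (- q, - p)) (filtermap uminus at_bot)"
    by (simp add: filterlim_filtermap)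
  thus ?thesis unfolding Rf_def at_top_mirror[symmetric] by (simp add: fun_eq_iff)
qed

lemma refl_der:
  assumes "\<And>x. (f has_real_derivative f' x) (at x)"
  shows "((\<lambda>x. - f (- x)) has_real_derivative f' (- x)) (at x)"
proof -
  have "(uminus has_real_derivative -1) (at x)" by (auto intro!: derivative_eq_intros)
  from DERIV_chain2[where g=uminus and x=x, OF assms this] have "((\<lambda>x. f (- x)) has_real_derivative f' (- x) * -1) (at x)" by simp
  from DERIV_minus[OF this] show ?thesis by simp
qed

lemma ode2_refl:
  assumes "ode2 v a a1 a2 b b1 b2"
  shows "ode2 (- v) (\<lambda>x. - b (- x)) (\<lambda>x. b1 (- x)) (\<lambda>x. - b2 (- x)) (\<lambda>x. - a (- x)) (\<lambda>x. a1 (- x)) (\<lambda>x. - a2 (- x))"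
proof -
  have da: "\<And>x. (a has_real_derivative a1 x) (at x)" and da1: "\<And>x. (a1 has_real_derivative a2 x) (at x)"
    and db: "\<And>x. (b has_real_derivative b1 x) (at x)" and db1: "\<And>x. (b1 has_real_derivative b2 x) (at x)"
    using assms unfolding ode2_def by blast+
  have ea: "\<And>x. a2 x = ((b x - a x)/2 - v) * a1 x - (if b1 x - a1 x \<le> 0 then 0 else (b x - a x) * (b1 x - a1 x) / 2)"
   and eb: "\<And>x. b2 x = - ((b x - a x)/2 + v) * b1 x - (if b1 x - a1 x \<le> 0 then (b x - a x) * (b1 x - a1 x) / 2 else 0)"
    using assms unfolding ode2_def by blast+
  have d2: "((\<lambda>x. f (- x)) has_real_derivative - f' (- x)) (at x)" if "\<And>x. (f has_real_derivative f' x) (at x)" for f f' x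
    using refl_der[of "\<lambda>x. - f x" "\<lambda>x. - f' x"] that by (auto intro: DERIV_minus)
  show ?thesis unfolding ode2_def
  proof (intro allI conjI)
    fix x
    show "((\<lambda>x. - b (- x)) has_real_derivative b1 (- x)) (at x)" by (rule refl_der[OF db])
    show "((\<lambda>x. - a (- x)) has_real_derivative a1 (- x)) (at x)" by (rule refl_der[OF da])
    show "((\<lambda>x. b1 (- x)) has_real_derivative - b2 (- x)) (at x)" by (rule d2[OF db1])
    show "((\<lambda>x. a1 (- x)) has_real_derivative - a2 (- x)) (at x)" by (rule d2[OF da1])
    define y where "y = - x"
    consider "b1 y < a1 y" | "b1 y = a1 y" | "b1 y > a1 y" by linarith
    hence "- b2 y = ((- a y - - b y) / 2 - - v) * b1 y - (if a1 y - b1 y \<le> 0 then 0 else (- a y - - b y) * (a1 y - b1 y) / 2) \<and>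
          - a2 y = - ((- a y - - b y) / 2 + - v) * a1 y - (if a1 y - b1 y \<le> 0 then (- a y - - b y) * (a1 y - b1 y) / 2 else 0)"
      by cases (simp_all only: ea eb; simp add: field_simps)+
    thus "- b2 (- x) = ((- a (- x) - - b (- x)) / 2 - - v) * b1 (- x) - (if a1 (- x) - b1 (- x) \<le> 0 then 0 else (- a (- x) - - b (- x)) * (a1 (- x) - b1 (- x)) / 2)"
      "- a2 (- x) = - ((- a (- x) - - b (- x)) / 2 + - v) * a1 (- x) - (if a1 (- x) - b1 (- x) \<le> 0 then (- a (- x) - - b (- x)) * (a1 (- x) - b1 (- x)) / 2 else 0)"
      by (simp_all add: y_def)
  qed
qed

lemma tw_refl:
  assumes tw: "traveling_wave v g"
  shows "traveling_wave (- v) (Rf g)"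
proof -
  define a where "a = (\<lambda>x. fst (g x))"
  define b where "b = (\<lambda>x. snd (g x))"
  have "ode2 v a (deriv a) (deriv (deriv a)) b (deriv b) (deriv (deriv b))"
    unfolding a_def b_def by (rule tw_to_ode[OF tw])
  from ode2_refl[OF this] have "ode2 (- v) (\<lambda>x. fst (Rf g x)) (\<lambda>x. deriv b (- x)) (\<lambda>x. - deriv (deriv b) (- x))
     (\<lambda>x. snd (Rf g x)) (\<lambda>x. deriv a (- x)) (\<lambda>x. - deriv (deriv a) (- x))"
    by (simp add: Rf_def a_def b_def)
  moreover obtain L R where "(g \<longlongrightarrow> L) at_bot" "(g \<longlongrightarrow> R) at_top" using tw unfolding traveling_wave_def by blast
  moreover have "(g \<longlongrightarrow> (fst L, snd L)) at_bot" "(g \<longlongrightarrow> (fst R, snd R)) at_top" using calculation(2,3) by simp_all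
  ultimately show ?thesis using tw_intro Rf_lim_bot Rf_lim_top by blast
qed

lemma partB_exist:
  assumes v: "v > 0"
  shows "traveling_wave v (Rf (Hw (-v))) \<and> nonconstant (Rf (Hw (-v))) \<and>
             (Rf (Hw (-v)) \<longlongrightarrow> ((1 - 2 * v), (1 - 6 * v))) at_bot \<and> (Rf (Hw (-v)) \<longlongrightarrow> (1, 1)) at_top \<and>
             traveling_wave v (Rf (Gw (-v))) \<and> nonconstant (Rf (Gw (-v))) \<and>
             (Rf (Gw (-v)) \<longlongrightarrow> ((1 - 6 * v), (1 - 2 * v))) at_bot \<and> (Rf (Gw (-v)) \<longlongrightarrow> (1, 1)) at_top"
proof -
  have v': "- v < 0" using v by simp
  note P = Gw_props[OF v']
  have t1: "traveling_wave v (Rf (Hw (-v)))" using tw_refl[of "-v" "Hw (-v)"] P by simp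
  have t2: "traveling_wave v (Rf (Gw (-v)))" using tw_refl[of "-v" "Gw (-v)"] P by simp
  have n1: "nonconstant (Rf (Hw (-v)))" using Rf_nonconst P by blast
  have n2: "nonconstant (Rf (Gw (-v)))" using Rf_nonconst P by blast
  have l1: "(Rf (Hw (-v)) \<longlongrightarrow> ((1 - 2 * v), (1 - 6 * v))) at_bot"
    using Rf_lim_bot[of "Hw (-v)" "-6 * - v - 1" "-2 * - v - 1"] P by (simp add: algebra_simps)
  have l2: "(Rf (Hw (-v)) \<longlongrightarrow> (1, 1)) at_top"
    using Rf_lim_top[of "Hw (-v)" "-1" "-1"] P by simp
  have l3: "(Rf (Gw (-v)) \<longlongrightarrow> ((1 - 6 * v), (1 - 2 * v))) at_bot"
    using Rf_lim_bot[of "Gw (-v)" "-2 * - v - 1" "-6 * - v - 1"] P by (simp add: algebra_simps)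
  have l4: "(Rf (Gw (-v)) \<longlongrightarrow> (1, 1)) at_top"
    using Rf_lim_top[of "Gw (-v)" "-1" "-1"] P by simp
  show ?thesis using t1 t2 n1 n2 l1 l2 l3 l4 by blast
qed

lemma partB_unique:
  assumes v: "v > 0" and tw: "traveling_wave v K" and nc: "nonconstant K" and lim: "(K \<longlongrightarrow> (1, 1)) at_top"
  shows "\<exists>s. K = (\<lambda>x. Rf (Hw (-v)) (x + s)) \<or> K = (\<lambda>x. Rf (Gw (-v)) (x + s))"
proof -
  have v': "- v < 0" using v by simp
  have "(Rf K \<longlongrightarrow> (-1, -1)) at_bot" using Rf_lim_bot[OF lim] by simp
  from partA_unique[OF v' tw_refl[OF tw] Rf_nonconst[OF nc] this] obtain s where
    "Rf K = (\<lambda>x. Gw (- v) (x + s)) \<or> Rf K = (\<lambda>x. Hw (- v) (x + s))" by blast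
  hence "Rf (Rf K) = Rf (\<lambda>x. Gw (- v) (x + s)) \<or> Rf (Rf K) = Rf (\<lambda>x. Hw (- v) (x + s))" by auto
  hence "K = (\<lambda>x. Rf (Gw (- v)) (x + - s)) \<or> K = (\<lambda>x. Rf (Hw (- v)) (x + - s))"
    unfolding Rf_Rf Rf_shift .
  thus ?thesis by blast
qed

theorem theorem3:
  shows
  "(\<forall>v::real. v < 0 \<longrightarrow>
      (\<exists>G H. traveling_wave v G \<and> nonconstant G \<and>
             (G \<longlongrightarrow> (-1, -1)) at_bot \<and> (G \<longlongrightarrow> (-2 * v - 1, -6 * v - 1)) at_top \<and>
             traveling_wave v H \<and> nonconstant H \<and>
             (H \<longlongrightarrow> (-1, -1)) at_bot \<and> (H \<longlongrightarrow> (-6 * v - 1, -2 * v - 1)) at_top \<and>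
             (\<forall>K. traveling_wave v K \<and> nonconstant K \<and> (K \<longlongrightarrow> (-1, -1)) at_bot \<longrightarrow>
                  (\<exists>s. K = (\<lambda>x. G (x + s)) \<or> K = (\<lambda>x. H (x + s))))))
   \<and> (\<forall>g. traveling_wave 0 g \<and> (g \<longlongrightarrow> (-1, -1)) at_bot \<longrightarrow> (\<forall>y. g y = (-1, -1)))
   \<and> (\<forall>v::real. v > 0 \<longrightarrow>
      (\<forall>g. traveling_wave v g \<and> (g \<longlongrightarrow> (-1, -1)) at_bot \<longrightarrow> \<not> nonconstant g))
   \<and> (\<forall>v::real. v > 0 \<longrightarrow>
      (\<exists>G H. traveling_wave v G \<and> nonconstant G \<and>
             (G \<longlongrightarrow> ((1 - 2 * v), (1 - 6 * v))) at_bot \<and> (G \<longlongrightarrow> (1, 1)) at_top \<and>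
             traveling_wave v H \<and> nonconstant H \<and>
             (H \<longlongrightarrow> ((1 - 6 * v), (1 - 2 * v))) at_bot \<and> (H \<longlongrightarrow> (1, 1)) at_top \<and>
             (\<forall>K. traveling_wave v K \<and> nonconstant K \<and> (K \<longlongrightarrow> (1, 1)) at_top \<longrightarrow>
                  (\<exists>s. K = (\<lambda>x. G (x + s)) \<or> K = (\<lambda>x. H (x + s))))))
   \<and> (\<forall>g. traveling_wave 0 g \<and> (g \<longlongrightarrow> (1, 1)) at_top \<longrightarrow> (\<forall>y. g y = (1, 1)))
   \<and> (\<forall>v::real. v < 0 \<longrightarrow>
      (\<forall>g. traveling_wave v g \<and> (g \<longlongrightarrow> (1, 1)) at_top \<longrightarrow> \<not> nonconstant g))"
proof (intro conjI allI impI)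
  fix v :: real assume v: "v < 0"
  show "\<exists>G H. traveling_wave v G \<and> nonconstant G \<and>
             (G \<longlongrightarrow> (-1, -1)) at_bot \<and> (G \<longlongrightarrow> (-2 * v - 1, -6 * v - 1)) at_top \<and>
             traveling_wave v H \<and> nonconstant H \<and>
             (H \<longlongrightarrow> (-1, -1)) at_bot \<and> (H \<longlongrightarrow> (-6 * v - 1, -2 * v - 1)) at_top \<and>
             (\<forall>K. traveling_wave v K \<and> nonconstant K \<and> (K \<longlongrightarrow> (-1, -1)) at_bot \<longrightarrow>
                  (\<exists>s. K = (\<lambda>x. G (x + s)) \<or> K = (\<lambda>x. H (x + s))))"
  proof (rule exI[of _ "Gw v"], rule exI[of _ "Hw v"], intro conjI allI impI)
    note P = Gw_props[OF v]
    show "traveling_wave v (Gw v)" using P by (elim conjE)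
    show "nonconstant (Gw v)" using P by (elim conjE)
    show "(Gw v \<longlongrightarrow> (-1, -1)) at_bot" using P by (elim conjE)
    show "(Gw v \<longlongrightarrow> (-2 * v - 1, -6 * v - 1)) at_top" using P by (elim conjE)
    show "traveling_wave v (Hw v)" using P by (elim conjE)
    show "nonconstant (Hw v)" using P by (elim conjE)
    show "(Hw v \<longlongrightarrow> (-1, -1)) at_bot" using P by (elim conjE)
    show "(Hw v \<longlongrightarrow> (-6 * v - 1, -2 * v - 1)) at_top" using P by (elim conjE)
    fix K assume K: "traveling_wave v K \<and> nonconstant K \<and> (K \<longlongrightarrow> (-1, -1)) at_bot"
    show "\<exists>s. K = (\<lambda>x. Gw v (x + s)) \<or> K = (\<lambda>x. Hw v (x + s))"
      using partA_unique[OF v] K by (elim conjE)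
  qed
next
  fix g y assume "traveling_wave 0 g \<and> (g \<longlongrightarrow> (-1, -1)) at_bot"
  thus "g y = (-1, -1)" using partA_zero by blast
next
  fix v :: real and g assume "v > 0" "traveling_wave v g \<and> (g \<longlongrightarrow> (-1, -1)) at_bot"
  thus "\<not> nonconstant g" using partA_pos by blast
next
  fix v :: real assume v: "v > 0"
  show "\<exists>G H. traveling_wave v G \<and> nonconstant G \<and>
             (G \<longlongrightarrow> ((1 - 2 * v), (1 - 6 * v))) at_bot \<and> (G \<longlongrightarrow> (1, 1)) at_top \<and>
             traveling_wave v H \<and> nonconstant H \<and>
             (H \<longlongrightarrow> ((1 - 6 * v), (1 - 2 * v))) at_bot \<and> (H \<longlongrightarrow> (1, 1)) at_top \<and>
             (\<forall>K. traveling_wave v K \<and> nonconstant K \<and> (K \<longlongrightarrow> (1, 1)) at_top \<longrightarrow>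
                  (\<exists>s. K = (\<lambda>x. G (x + s)) \<or> K = (\<lambda>x. H (x + s))))"
  proof (rule exI[of _ "Rf (Hw (-v))"], rule exI[of _ "Rf (Gw (-v))"], intro conjI allI impI)
    note P = partB_exist[OF v]
    show "traveling_wave v (Rf (Hw (-v)))" using P by (elim conjE)
    show "nonconstant (Rf (Hw (-v)))" using P by (elim conjE)
    show "(Rf (Hw (-v)) \<longlongrightarrow> ((1 - 2 * v), (1 - 6 * v))) at_bot" using P by (elim conjE)
    show "(Rf (Hw (-v)) \<longlongrightarrow> (1, 1)) at_top" using P by (elim conjE)
    show "traveling_wave v (Rf (Gw (-v)))" using P by (elim conjE)
    show "nonconstant (Rf (Gw (-v)))" using P by (elim conjE)
    show "(Rf (Gw (-v)) \<longlongrightarrow> ((1 - 6 * v), (1 - 2 * v))) at_bot" using P by (elim conjE)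
    show "(Rf (Gw (-v)) \<longlongrightarrow> (1, 1)) at_top" using P by (elim conjE)
    fix K assume K: "traveling_wave v K \<and> nonconstant K \<and> (K \<longlongrightarrow> (1, 1)) at_top"
    show "\<exists>s. K = (\<lambda>x. Rf (Hw (-v)) (x + s)) \<or> K = (\<lambda>x. Rf (Gw (-v)) (x + s))"
      using partB_unique[OF v] K by (elim conjE)
  qed
next
  fix g y assume g: "traveling_wave 0 g \<and> (g \<longlongrightarrow> (1, 1)) at_top"
  hence "traveling_wave 0 (Rf g)" using tw_refl[of 0 g] by simp
  moreover have "(Rf g \<longlongrightarrow> (-1, -1)) at_bot" using Rf_lim_bot[of g 1 1] g by simp
  ultimately have "\<forall>y. Rf g y = (-1, -1)" using partA_zero by blast
  hence h: "Rf g (-y) = (-1, -1)" by blast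
  have "Rf (Rf g) y = (- snd (Rf g (-y)), - fst (Rf g (-y)))" by (rule Rf_def)
  hence "Rf (Rf g) y = (1, 1)" unfolding h by simp
  thus "g y = (1, 1)" unfolding Rf_Rf .
next
  fix v :: real and g assume v: "v < 0" and g: "traveling_wave v g \<and> (g \<longlongrightarrow> (1, 1)) at_top"
  have "- v > 0" using v by simp
  moreover have "traveling_wave (- v) (Rf g)" using tw_refl g by blast
  moreover have "(Rf g \<longlongrightarrow> (-1, -1)) at_bot" using Rf_lim_bot[of g 1 1] g by simp
  ultimately have "\<not> nonconstant (Rf g)" using partA_pos by blast
  thus "\<not> nonconstant g" using Rf_nonconst by blast
qed

end
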